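(* Let $P$ be a distribution on $\mathcal{X}$, $R>0$, $K>0$, and let $\overline{P}_e^{(n)}$ be the random-coding average error probability (codebook letters i.i.d. $P$) of the maximum-likelihood decoder, averaged over messages, codebooks and channel instances. Then \[ \limsup_{n\to\infty} -\tfrac{1}{n}\log\overline{P}_e^{(n)}\le E_e(P,R,K),\qquad E_e(P,R,K)=\min_{TV}\Big\{D(TV\|PW)+\big|A_{TV}-R+|B_{TV}-K|^{+}\big|^{+}\Big\}. \]
   Context: Channel model: $\mathcal{X},\mathcal{Y}$ finite alphabets, $W(y|x)$ a fixed conditional distribution. A codebook of block length $n$ has $\lfloor e^{nR}\rfloor$ codewords $\mathbf{x}_m\in\mathcal{X}^n$. A channel instance: independently for each message $m$, a cloud of $\lfloor e^{nK}\rfloor$ independent sequences $\mathbf{y}\in\mathcal{Y}^n$ whose letters are independent with $y_i\sim W(\cdot|x_{m,i})$. Messages are equiprobable; when $m$ is sent, the output is a uniformly chosen vector of the cloud of $m$. The decoder knows codebook and clouds; the ML decoder outputs a message whose cloud contains the most copies of the received vector (ties broken at random). Logs are natural. $TV$ is a joint distribution on $\mathcal{Y}\times\mathcal{X}$ with $\mathcal{Y}$-marginal $T$ and conditional $V(x|y)$; $PW$ is $P(x)W(y|x)$; $D(TV\|PW)=\sum T(y)V(x|y)\log\frac{T(y)V(x|y)}{P(x)W(y|x)}$; $A_{TV}=\sum T(y)V(x|y)\log\frac{V(x|y)}{P(x)}$; $B_{TV}=\mathbb{E}_{TV}[-\log W(Y|X)]$; $|t|^{+}=\max\{0,t\}$.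 *)

theory Defs
  imports "HOL-Analysis.Analysis"
begin

definition seqs :: "nat \<Rightarrow> 'a list set" where
  "seqs n = {xs. length xs = n}"

definition seq_prob :: "('a \<Rightarrow> real) \<Rightarrow> 'a list \<Rightarrow> real" where
  "seq_prob P xs = (\<Prod>i<length xs. P (xs ! i))"

definition chan_prob :: "('x \<Rightarrow> 'y \<Rightarrow> real) \<Rightarrow> 'x list \<Rightarrow> 'y list \<Rightarrow> real" where
  "chan_prob W xs ys = (\<Prod>i<length xs. W (xs ! i) (ys ! i))"

text \<open>Number of codewords floor(e^(nR)) and cloud size floor(e^(nK)).\<close>
definition exp_size :: "nat \<Rightarrow> real \<Rightarrow> nat" where
  "exp_size n R = nat \<lfloor>exp (real n * R)\<rfloor>"

text \<open>Error probability of the ML decoder (random tie breaking) given the clouds Y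
  (Y m j = j-th vector of the cloud of message m, m < M, j < L), when message m is
  sent and the j-th vector of its cloud is output.\<close>
definition ml_error :: "nat \<Rightarrow> nat \<Rightarrow> (nat \<Rightarrow> nat \<Rightarrow> 'y list) \<Rightarrow> nat \<Rightarrow> nat \<Rightarrow> real" where
  "ml_error M L Y m j =
    (let y = Y m j;
         cnt = (\<lambda>m'. card {j'. j' < L \<and> Y m' j' = y});
         best = {m'. m' < M \<and> (\<forall>m''<M. cnt m'' \<le> cnt m')}
     in 1 - (if m \<in> best then 1 / real (card best) else 0))"

definition avg_error :: "('x \<Rightarrow> real) \<Rightarrow> ('x \<Rightarrow> 'y \<Rightarrow> real) \<Rightarrow> real \<Rightarrow> real \<Rightarrow> nat \<Rightarrow> real" where
  "avg_error P W R K n =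
    (let M = exp_size n R; L = exp_size n K in
     (\<Sum>C \<in> PiE {..<M} (\<lambda>_. seqs n).
      \<Sum>Y \<in> PiE {..<M} (\<lambda>_. PiE {..<L} (\<lambda>_. seqs n)).
        (\<Prod>m<M. seq_prob P (C m)) *
        (\<Prod>m<M. \<Prod>j<L. chan_prob W (C m) (Y m j)) *
        ((1 / real M) * (\<Sum>m<M. (1 / real L) * (\<Sum>j<L. ml_error M L Y m j)))))"

text \<open>Joint distributions TV on Y x X, absolutely continuous w.r.t. PW
  (others give D(TV||PW) = infinity and never attain the minimum).\<close>
definition joint_dists :: "('x \<Rightarrow> real) \<Rightarrow> ('x \<Rightarrow> 'y \<Rightarrow> real) \<Rightarrow> ('y \<times> 'x \<Rightarrow> real) set" where
  "joint_dists P W = {Q. (\<forall>p. 0 \<le> Q p) \<and> (\<Sum>p\<in>UNIV. Q p) = 1 \<and>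
                         (\<forall>y x. 0 < Q (y, x) \<longrightarrow> 0 < P x * W x y)}"

definition marg :: "('y \<times> 'x::finite \<Rightarrow> real) \<Rightarrow> 'y \<Rightarrow> real" where
  "marg Q y = (\<Sum>x\<in>UNIV. Q (y, x))"

definition condV :: "('y \<times> 'x::finite \<Rightarrow> real) \<Rightarrow> 'y \<Rightarrow> 'x \<Rightarrow> real" where
  "condV Q y x = Q (y, x) / marg Q y"

definition divg :: "('x \<Rightarrow> real) \<Rightarrow> ('x \<Rightarrow> 'y \<Rightarrow> real) \<Rightarrow> ('y::finite \<times> 'x::finite \<Rightarrow> real) \<Rightarrow> real" where
  "divg P W Q = (\<Sum>(y, x)\<in>UNIV. Q (y, x) * ln (Q (y, x) / (P x * W x y)))"

definition A_TV :: "('x \<Rightarrow> real) \<Rightarrow> ('y::finite \<times> 'x::finite \<Rightarrow> real) \<Rightarrow> real" where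
  "A_TV P Q = (\<Sum>(y, x)\<in>UNIV. Q (y, x) * ln (condV Q y x / P x))"

definition B_TV :: "('x \<Rightarrow> 'y \<Rightarrow> real) \<Rightarrow> ('y::finite \<times> 'x::finite \<Rightarrow> real) \<Rightarrow> real" where
  "B_TV W Q = (\<Sum>(y, x)\<in>UNIV. Q (y, x) * (- ln (W x y)))"

definition pos_part :: "real \<Rightarrow> real" where
  "pos_part t = max 0 t"

definition E_e :: "('x::finite \<Rightarrow> real) \<Rightarrow> ('x \<Rightarrow> 'y::finite \<Rightarrow> real) \<Rightarrow> real \<Rightarrow> real \<Rightarrow> real" where
  "E_e P W R K = Inf ((\<lambda>Q. divg P W Q + pos_part (A_TV P Q - R + pos_part (B_TV W Q - K)))
                      ` joint_dists P W)"

end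

theory Submission
  imports Defs "HOL-Combinatorics.Multiset_Permutations" "HOL-Combinatorics.Permutations" "HOL-Real_Asymp.Real_Asymp"
begin


lemma finite_seqs[simp]: "finite (seqs n :: ('a::finite) list set)"
  unfolding seqs_def using finite_lists_length_eq[of "UNIV::'a set" n] by simp

definition E1 :: "nat \<Rightarrow> nat \<Rightarrow> ('x \<Rightarrow> real) \<Rightarrow> ('x \<Rightarrow> 'y \<Rightarrow> real) \<Rightarrow> ('x list \<Rightarrow> (nat \<Rightarrow> 'y list) \<Rightarrow> real) \<Rightarrow> real" where
  "E1 n L P W \<phi> = (\<Sum>x\<in>seqs n. seq_prob P x * (\<Sum>c\<in>PiE {..<L} (\<lambda>_. seqs n). (\<Prod>j<L. chan_prob W x (c j)) * \<phi> x c))"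

lemma factor_E:
  fixes P :: "'x::finite \<Rightarrow> real" and W :: "'x \<Rightarrow> 'y::finite \<Rightarrow> real" and M L :: nat
  shows "(\<Sum>C\<in>PiE {..<M} (\<lambda>_. seqs n). \<Sum>Y\<in>PiE {..<M} (\<lambda>_. PiE {..<L} (\<lambda>_. seqs n)).
      (\<Prod>m<M. seq_prob P (C m)) * (\<Prod>m<M. \<Prod>j<L. chan_prob W (C m) (Y m j)) * (\<Prod>m<M. \<phi> m (C m) (Y m)))
    = (\<Prod>m<M. E1 n L P W (\<phi> m))"
proof -
  have inner: "(\<Sum>Y\<in>PiE {..<M} (\<lambda>_. PiE {..<L} (\<lambda>_. seqs n)).
      (\<Prod>m<M. \<Prod>j<L. chan_prob W (C m) (Y m j)) * (\<Prod>m<M. \<phi> m (C m) (Y m)))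
    = (\<Prod>m<M. \<Sum>c\<in>PiE {..<L} (\<lambda>_. seqs n). (\<Prod>j<L. chan_prob W (C m) (c j)) * \<phi> m (C m) c)" for C
    by (subst prod_sum_PiE) (auto simp: prod.distrib intro!: finite_PiE)
  have "(\<Sum>C\<in>PiE {..<M} (\<lambda>_. seqs n). \<Sum>Y\<in>PiE {..<M} (\<lambda>_. PiE {..<L} (\<lambda>_. seqs n)).
      (\<Prod>m<M. seq_prob P (C m)) * (\<Prod>m<M. \<Prod>j<L. chan_prob W (C m) (Y m j)) * (\<Prod>m<M. \<phi> m (C m) (Y m)))
     = (\<Sum>C\<in>PiE {..<M} (\<lambda>_. seqs n). (\<Prod>m<M. seq_prob P (C m)) * (\<Prod>m<M. \<Sum>c\<in>PiE {..<L} (\<lambda>_. seqs n). (\<Prod>j<L. chan_prob W (C m) (c j)) * \<phi> m (C m) c))"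
    by (simp add: mult.assoc sum_distrib_left inner[symmetric])
  also have "\<dots> = (\<Sum>C\<in>PiE {..<M} (\<lambda>_. seqs n). (\<Prod>m<M. seq_prob P (C m) * (\<Sum>c\<in>PiE {..<L} (\<lambda>_. seqs n). (\<Prod>j<L. chan_prob W (C m) (c j)) * \<phi> m (C m) c)))"
    by (simp add: prod.distrib)
  also have "\<dots> = (\<Prod>m<M. E1 n L P W (\<phi> m))"
    unfolding E1_def by (subst prod_sum_PiE) (auto simp: finite_lessThan)
  finally show ?thesis .
qed


lemma sum_seqs_prod:
  fixes f :: "nat \<Rightarrow> 'a::finite \<Rightarrow> real"
  shows "(\<Sum>ys\<in>seqs n. \<Prod>i<n. f i (ys ! i)) = (\<Prod>i<n. \<Sum>b\<in>UNIV. f i b)"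
proof -
  have bij: "bij_betw (\<lambda>ys. restrict (\<lambda>i. ys ! i) {..<n}) (seqs n) (PiE {..<n} (\<lambda>_. UNIV))"
  proof (rule bij_betwI[where g = "\<lambda>g. map g [0..<n]"])
    show "(\<lambda>ys. restrict ((!) ys) {..<n}) \<in> seqs n \<rightarrow> ({..<n} \<rightarrow>\<^sub>E UNIV)" by auto
    show "(\<lambda>g. map g [0..<n]) \<in> ({..<n} \<rightarrow>\<^sub>E UNIV) \<rightarrow> seqs n" by (auto simp: seqs_def)
    show "map (restrict ((!) x) {..<n}) [0..<n] = x" if "x \<in> seqs n" for x
      using that by (auto simp: seqs_def intro: nth_equalityI)
    show "restrict ((!) (map y [0..<n])) {..<n} = y" if "y \<in> {..<n} \<rightarrow>\<^sub>E UNIV" for y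
      using that by (auto simp: PiE_def extensional_def restrict_def fun_eq_iff)
  qed
  have "(\<Sum>g\<in>PiE {..<n} (\<lambda>_. UNIV). \<Prod>i<n. f i (g i)) = (\<Sum>ys\<in>seqs n. \<Prod>i<n. f i (restrict ((!) ys) {..<n} i))"
    by (rule sum.reindex_bij_betw[OF bij, symmetric])
  also have "\<dots> = (\<Sum>ys\<in>seqs n. \<Prod>i<n. f i (ys ! i))" by (auto intro!: sum.cong prod.cong)
  finally have "(\<Sum>ys\<in>seqs n. \<Prod>i<n. f i (ys ! i)) = (\<Sum>g\<in>PiE {..<n} (\<lambda>_. UNIV). \<Prod>i<n. f i (g i))" by simp
  also have "\<dots> = (\<Prod>i<n. \<Sum>b\<in>UNIV. f i b)" by (subst prod_sum_PiE) auto
  finally show ?thesis .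
qed

lemma chan_sum:
  fixes W :: "'x \<Rightarrow> 'y::finite \<Rightarrow> real" and L :: nat
  assumes "\<forall>x. (\<Sum>y\<in>UNIV. W x y) = 1" "length x = n"
  shows "(\<Sum>y\<in>seqs n. chan_prob W x y) = 1"
  unfolding chan_prob_def using sum_seqs_prod[where n=n and f="\<lambda>i b. W (x!i) b"] assms by simp

lemma seq_sum:
  fixes P :: "'x::finite \<Rightarrow> real"
  assumes "(\<Sum>x\<in>UNIV. P x) = 1"
  shows "(\<Sum>x\<in>seqs n. seq_prob P x) = 1"
proof -
  have "(\<Sum>x\<in>seqs n. seq_prob P x) = (\<Sum>x\<in>seqs n. \<Prod>i<n. P (x!i))"
    by (rule sum.cong) (auto simp: seq_prob_def seqs_def)
  thus ?thesis using sum_seqs_prod[where n=n and f="\<lambda>i b. P b"] assms by simp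
qed

lemma chan_nonneg: "\<forall>x y. 0 \<le> W x y \<Longrightarrow> 0 \<le> chan_prob W x y"
  unfolding chan_prob_def by (auto intro: prod_nonneg)

lemma seq_nonneg: "\<forall>x. 0 \<le> P x \<Longrightarrow> 0 \<le> seq_prob P x"
  unfolding seq_prob_def by (auto intro: prod_nonneg)

lemma cloud_none:
  fixes W :: "'x \<Rightarrow> 'y::finite \<Rightarrow> real" and L :: nat
  assumes W1: "\<forall>x. (\<Sum>y\<in>UNIV. W x y) = 1" and lx: "length x = n" and y: "y \<in> seqs n"
    and G: "G \<subseteq> {..<L}"
  shows "(\<Sum>c\<in>PiE {..<L} (\<lambda>_. seqs n). (\<Prod>j<L. chan_prob W x (c j)) * (if \<forall>j\<in>G. c j \<noteq> y then 1 else 0))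
      = (1 - chan_prob W x y) ^ card G"
proof -
  have "(\<Sum>c\<in>PiE {..<L} (\<lambda>_. seqs n). (\<Prod>j<L. chan_prob W x (c j)) * (if \<forall>j\<in>G. c j \<noteq> y then 1 else 0))
     = (\<Sum>c\<in>PiE {..<L} (\<lambda>_. seqs n). \<Prod>j<L. chan_prob W x (c j) * (if j \<in> G \<and> c j = y then 0 else 1))"
  proof (rule sum.cong[OF refl])
    fix c :: "nat \<Rightarrow> 'y list"
    have e: "(\<Prod>j<L. (if j \<in> G \<and> c j = y then 0 else 1::real)) = (if \<forall>j\<in>G. c j \<noteq> y then 1 else 0)"
    proof (cases "\<forall>j\<in>G. c j \<noteq> y")
      case True thus ?thesis by (intro trans[OF prod.neutral]) auto
    next
      case False
      then obtain j where j: "j \<in> G" "c j = y" by auto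
      with G have "j \<in> {..<L}" by auto
      hence "(\<Prod>j<L. (if j \<in> G \<and> c j = y then 0 else 1::real)) = 0"
        by (intro prod_zero) (use j in auto)
      thus ?thesis by (subst if_not_P[OF False])
    qed
    show "(\<Prod>j<L. chan_prob W x (c j)) * (if \<forall>j\<in>G. c j \<noteq> y then 1 else 0) =
          (\<Prod>j<L. chan_prob W x (c j) * (if j \<in> G \<and> c j = y then 0 else 1))"
      by (subst prod.distrib) (simp only: e)
  qed
  also have "\<dots> = (\<Prod>j<L. \<Sum>y'\<in>seqs n. chan_prob W x y' * (if j \<in> G \<and> y' = y then 0 else 1))"
    using prod_sum_PiE[of "{..<L}" "\<lambda>_. seqs n" "\<lambda>j y'. chan_prob W x y' * (if j \<in> G \<and> y' = y then 0 else 1)"] by simp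
  also have "\<dots> = (\<Prod>j<L. if j \<in> G then 1 - chan_prob W x y else 1)"
  proof (rule prod.cong[OF refl])
    fix j assume "j \<in> {..<L}"
    have s1: "(\<Sum>y'\<in>seqs n. chan_prob W x y') = 1" using chan_sum[OF W1 lx] .
    show "(\<Sum>y'\<in>seqs n. chan_prob W x y' * (if j \<in> G \<and> y' = y then 0 else 1)) =
          (if j \<in> G then 1 - chan_prob W x y else 1)"
    proof (cases "j \<in> G")
      case True
      have "(\<Sum>y'\<in>seqs n. chan_prob W x y' * (if y' = y then 0 else 1)) =
            (\<Sum>y'\<in>seqs n. chan_prob W x y') - (\<Sum>y'\<in>seqs n. if y' = y then chan_prob W x y' else 0)"
        by (subst sum_subtractf[symmetric]) (auto intro!: sum.cong)
      also have "\<dots> = 1 - chan_prob W x y" using s1 y by simp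
      finally show ?thesis using True by simp
    qed (use s1 in simp)
  qed
  also have "\<dots> = (\<Prod>j\<in>G. if j \<in> G then 1 - chan_prob W x y else 1)"
    by (rule prod.mono_neutral_right) (use G in auto)
  also have "\<dots> = (\<Prod>j\<in>G. 1 - chan_prob W x y)" by simp
  also have "\<dots> = (1 - chan_prob W x y) ^ card G" by simp
  finally show ?thesis .
qed

lemma cloud_hit:
  fixes W :: "'x \<Rightarrow> 'y::finite \<Rightarrow> real" and L :: nat
  assumes W1: "\<forall>x. (\<Sum>y\<in>UNIV. W x y) = 1" and lx: "length x = n" and y: "y \<in> seqs n"
    and G: "G \<subseteq> {..<L}"
  shows "(\<Sum>c\<in>PiE {..<L} (\<lambda>_. seqs n). (\<Prod>j<L. chan_prob W x (c j)) * (if \<exists>j\<in>G. c j = y then 1 else 0))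
      = 1 - (1 - chan_prob W x y) ^ card G"
proof -
  have tot: "(\<Sum>c\<in>PiE {..<L} (\<lambda>_. seqs n). (\<Prod>j<L. chan_prob W x (c j))) = 1"
    using prod_sum_PiE[of "{..<L}" "\<lambda>_. seqs n" "\<lambda>j y'. chan_prob W x y'"] chan_sum[OF W1 lx] by simp
  have "(\<Sum>c\<in>PiE {..<L} (\<lambda>_. seqs n). (\<Prod>j<L. chan_prob W x (c j)) * (if \<exists>j\<in>G. c j = y then 1 else 0))
      = (\<Sum>c\<in>PiE {..<L} (\<lambda>_. seqs n). (\<Prod>j<L. chan_prob W x (c j)) - (\<Prod>j<L. chan_prob W x (c j)) * (if \<forall>j\<in>G. c j \<noteq> y then 1 else 0))"
    by (rule sum.cong) auto
  also have "\<dots> = (\<Sum>c\<in>PiE {..<L} (\<lambda>_. seqs n). (\<Prod>j<L. chan_prob W x (c j))) -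
        (\<Sum>c\<in>PiE {..<L} (\<lambda>_. seqs n). (\<Prod>j<L. chan_prob W x (c j)) * (if \<forall>j\<in>G. c j \<noteq> y then 1 else 0))"
    by (rule sum_subtractf)
  finally show ?thesis using tot cloud_none[OF assms] by simp
qed


lemma best_core:
  fixes c :: "nat \<Rightarrow> nat" and M :: nat
  assumes M: "M \<ge> 1"
  defines "best \<equiv> {m. m < M \<and> (\<forall>m''<M. c m'' \<le> c m)}"
  shows "(\<Sum>m<M. real (c m) * (1 - (if m \<in> best then 1 / real (card best) else 0)))
         \<ge> (1/2) * (\<Sum>a<M. min (real (c a)) (\<Sum>m\<in>{..<M}-{a}. real (c m)))"
proof -
  obtain ms where ms: "ms < M" "\<forall>m<M. c m \<le> c ms"
  proof -
    have "finite (c ` {..<M})" "c ` {..<M} \<noteq> {}" using M by (auto simp: lessThan_empty_iff)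
    hence "Max (c ` {..<M}) \<in> c ` {..<M}" by (rule Max_in)
    then obtain ms where "ms < M" "c ms = Max (c ` {..<M})" by auto
    moreover have "\<forall>m<M. c m \<le> Max (c ` {..<M})" by auto
    ultimately show ?thesis using that by auto
  qed
  have msb: "ms \<in> best" using ms unfolding best_def by auto
  have fb: "finite best" unfolding best_def by auto
  have cb: "card best \<ge> 1" using fb msb by (metis One_nat_def Suc_leI card_gt_0_iff empty_iff)
  have bsub: "best \<subseteq> {..<M}" unfolding best_def by auto
  have cbest: "\<And>m. m \<in> best \<Longrightarrow> c m = c ms" using ms unfolding best_def
    by (auto intro: antisym)
  define tot where "tot = (\<Sum>m<M. real (c m))"
  have "(\<Sum>m<M. real (c m) * (1 - (if m \<in> best then 1 / real (card best) else 0)))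
      = tot - (\<Sum>m<M. if m \<in> best then real (c m) / real (card best) else 0)"
    unfolding tot_def by (subst sum_subtractf[symmetric]) (auto intro!: sum.cong simp: field_simps)
  also have "(\<Sum>m<M. if m \<in> best then real (c m) / real (card best) else 0) = (\<Sum>m\<in>best. real (c ms) / real (card best))"
    using bsub by (subst sum.If_cases) (auto simp: Int_absorb1 cbest intro!: sum.cong)
  also have "\<dots> = real (c ms)" using cb by simp
  finally have lhs: "(\<Sum>m<M. real (c m) * (1 - (if m \<in> best then 1 / real (card best) else 0))) = tot - real (c ms)" .
  have rest: "\<And>a. a < M \<Longrightarrow> (\<Sum>m\<in>{..<M}-{a}. real (c m)) = tot - real (c a)"
    unfolding tot_def by (subst sum_diff1) auto
  have "(\<Sum>a<M. min (real (c a)) (\<Sum>m\<in>{..<M}-{a}. real (c m)))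
      \<le> (\<Sum>a<M. (if a = ms then tot - real (c ms) else real (c a)))"
    by (rule sum_mono) (auto simp: rest)
  also have "\<dots> = (tot - real (c ms)) + (\<Sum>a\<in>{..<M}-{ms}. real (c a))"
    using ms(1) by (subst sum.remove[of _ ms]) (auto intro!: sum.cong)
  also have "\<dots> = 2 * (tot - real (c ms))" using rest[OF ms(1)] by simp
  finally show ?thesis using lhs by simp
qed

lemma regroup:
  fixes Y :: "nat \<Rightarrow> nat \<Rightarrow> 'y list" and M L :: nat
  assumes M: "M \<ge> 1" and fS: "finite Sy" and YS: "\<forall>m<M. \<forall>j<L. Y m j \<in> Sy"
  shows "(\<Sum>m<M. \<Sum>j<L. ml_error M L Y m j) \<ge> (1/2) * (\<Sum>a<M. \<Sum>y\<in>Sy.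
            min (real (card {j. j < L \<and> Y a j = y})) (\<Sum>m\<in>{..<M}-{a}. real (card {j. j < L \<and> Y m j = y})))"
proof -
  define cnt where "cnt y m = card {j. j < L \<and> Y m j = y}" for y m
  define best where "best y = {m. m < M \<and> (\<forall>m''<M. cnt y m'' \<le> cnt y m)}" for y
  define e where "e y m = 1 - (if m \<in> best y then 1 / real (card (best y)) else 0)" for y m
  have ml: "ml_error M L Y m j = e (Y m j) m" for m j
    unfolding ml_error_def Let_def e_def best_def cnt_def by simp
  have grp: "(\<Sum>j<L. ml_error M L Y m j) = (\<Sum>y\<in>Sy. real (cnt y m) * e y m)" if m: "m < M" for m
  proof -
    have "(\<Sum>j<L. ml_error M L Y m j) = (\<Sum>j<L. e (Y m j) m)" by (simp add: ml)
    also have "\<dots> = (\<Sum>y\<in>Sy. \<Sum>j\<in>{j\<in>{..<L}. Y m j = y}. e (Y m j) m)"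
      by (rule sum.group[symmetric]) (use fS YS m in auto)
    also have "\<dots> = (\<Sum>y\<in>Sy. real (cnt y m) * e y m)"
      unfolding cnt_def by (intro sum.cong refl) (simp add: Collect_conj_eq lessThan_def Int_commute)
    finally show ?thesis .
  qed
  have "(\<Sum>m<M. \<Sum>j<L. ml_error M L Y m j) = (\<Sum>m<M. \<Sum>y\<in>Sy. real (cnt y m) * e y m)"
    by (intro sum.cong refl grp) simp
  also have "\<dots> = (\<Sum>y\<in>Sy. \<Sum>m<M. real (cnt y m) * e y m)" by (rule sum.swap)
  also have "\<dots> \<ge> (\<Sum>y\<in>Sy. (1/2) * (\<Sum>a<M. min (real (cnt y a)) (\<Sum>m\<in>{..<M}-{a}. real (cnt y m))))"
    by (intro sum_mono) (unfold e_def best_def, rule best_core[OF M])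
  finally have "(\<Sum>m<M. \<Sum>j<L. ml_error M L Y m j) \<ge> (1/2) * (\<Sum>y\<in>Sy. \<Sum>a<M. min (real (cnt y a)) (\<Sum>m\<in>{..<M}-{a}. real (cnt y m)))"
    by (simp add: sum_distrib_left)
  also have "(\<Sum>y\<in>Sy. \<Sum>a<M. min (real (cnt y a)) (\<Sum>m\<in>{..<M}-{a}. real (cnt y m)))
     = (\<Sum>a<M. \<Sum>y\<in>Sy. min (real (cnt y a)) (\<Sum>m\<in>{..<M}-{a}. real (cnt y m)))" by (rule sum.swap)
  finally show ?thesis unfolding cnt_def .
qed

lemma exactly_one:
  fixes u :: real and d :: "nat \<Rightarrow> nat" and i :: "nat \<Rightarrow> real"
  assumes fJ: "finite J" and i01: "\<forall>m\<in>J. i m = 0 \<or> i m = 1" and u: "u \<ge> 0"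
  shows "(\<Sum>b\<in>J. i b * min u (real (d b)) * (\<Prod>m\<in>J-{b}. 1 - i m * (if d m \<ge> 1 then 1 else 0)))
         \<le> min u (\<Sum>m\<in>J. real (d m))"
proof -
  define t where "t b = i b * min u (real (d b)) * (\<Prod>m\<in>J-{b}. 1 - i m * (if d m \<ge> 1 then 1 else 0))" for b
  define E where "E = {m\<in>J. i m = 1 \<and> d m \<ge> 1}"
  have fac01: "\<And>m. m \<in> J \<Longrightarrow> 0 \<le> 1 - i m * (if d m \<ge> 1 then 1 else 0) \<and> 1 - i m * (if d m \<ge> 1 then 1 else 0) \<le> 1"
    using i01 by auto
  have t0: "t b = 0" if "b \<in> J" "b \<notin> E" for b
  proof -
    from that have "i b = 0 \<or> d b = 0" using i01 unfolding E_def by force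
    thus ?thesis unfolding t_def using u by auto
  qed
  have lhs0: "0 \<le> min u (\<Sum>m\<in>J. real (d m))" using u by (simp add: sum_nonneg)
  show ?thesis
  proof (cases "E = {}")
    case True
    hence "(\<Sum>b\<in>J. t b) = 0" using t0 by (intro sum.neutral) auto
    thus ?thesis using lhs0 unfolding t_def by simp
  next
    case False
    then obtain b0 where b0: "b0 \<in> E" by auto
    hence b0J: "b0 \<in> J" unfolding E_def by auto
    have tb: "t b = 0" if "b \<in> J" "b \<noteq> b0" for b
    proof (cases "b \<in> E")
      case False thus ?thesis using t0 that by auto
    next
      case True
      have "(\<Prod>m\<in>J-{b}. 1 - i m * (if d m \<ge> 1 then 1 else 0)) = 0"
        using b0 that fJ unfolding E_def by (intro prod_zero) auto
      thus ?thesis unfolding t_def by simp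
    qed
    have "(\<Sum>b\<in>J. t b) = t b0 + (\<Sum>b\<in>J-{b0}. t b)" using fJ b0J by (rule sum.remove)
    also have "(\<Sum>b\<in>J-{b0}. t b) = 0" using tb by (intro sum.neutral) auto
    finally have st: "(\<Sum>b\<in>J. t b) = t b0" by simp
    have p1: "(\<Prod>m\<in>J-{b0}. 1 - i m * (if d m \<ge> 1 then 1 else 0)) \<le> 1"
      using fac01 by (intro prod_le_1) auto
    have p0: "0 \<le> (\<Prod>m\<in>J-{b0}. 1 - i m * (if d m \<ge> 1 then 1 else 0))"
      using fac01 by (intro prod_nonneg) auto
    have ib: "i b0 = 1" using b0 unfolding E_def by auto
    have m0: "0 \<le> min u (real (d b0))" using u by simp
    have "t b0 \<le> min u (real (d b0))"
      unfolding t_def ib using mult_left_le[OF p1 m0] by simp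
    also have "\<dots> \<le> min u (\<Sum>m\<in>J. real (d m))"
      using b0J fJ by (intro min.mono order.refl member_le_sum) auto
    finally show ?thesis using st unfolding t_def by simp
  qed
qed

definition ind :: "bool \<Rightarrow> real" where "ind b = (if b then 1 else 0)"

lemma ind_simps[simp]: "ind True = 1" "ind False = 0" "0 \<le> ind b" "ind b \<le> 1"
  by (auto simp: ind_def)

lemma blocks_one:
  fixes A :: "nat \<Rightarrow> bool"
  assumes "Bn * L' \<le> L"
  shows "(\<Sum>\<beta><Bn. ind (\<exists>j\<in>{\<beta>*L'..<\<beta>*L'+L'}. A j)) \<le> real (card {j. j < L \<and> A j})"
proof -
  have "(\<Sum>\<beta><Bn. ind (\<exists>j\<in>{\<beta>*L'..<\<beta>*L'+L'}. A j)) \<le> (\<Sum>\<beta><Bn. \<Sum>j\<in>{\<beta>*L'..<\<beta>*L'+L'}. ind (A j))"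
  proof (rule sum_mono)
    fix \<beta> show "ind (\<exists>j\<in>{\<beta>*L'..<\<beta>*L'+L'}. A j) \<le> (\<Sum>j\<in>{\<beta>*L'..<\<beta>*L'+L'}. ind (A j))"
    proof (cases "\<exists>j\<in>{\<beta>*L'..<\<beta>*L'+L'}. A j")
      case True
      then obtain j where j: "j \<in> {\<beta>*L'..<\<beta>*L'+L'}" "A j" by auto
      have "ind (A j) \<le> (\<Sum>j\<in>{\<beta>*L'..<\<beta>*L'+L'}. ind (A j))"
        using j by (intro member_le_sum) auto
      thus ?thesis using True j by simp
    qed (simp add: sum_nonneg)
  qed
  also have "\<dots> = (\<Sum>j<Bn*L'. ind (A j))" by (rule sum.nat_group)
  also have "\<dots> \<le> (\<Sum>j<L. ind (A j))" using assms by (intro sum_mono2) auto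
  also have "\<dots> = real (card {j. j < L \<and> A j})"
  proof -
    have "(\<Sum>j<L. ind (A j)) = (\<Sum>j\<in>{j. j < L \<and> A j}. 1)"
      unfolding ind_def by (subst sum.If_cases) (auto intro!: sum.cong simp: lessThan_def Collect_conj_eq)
    thus ?thesis by simp
  qed
  finally show ?thesis .
qed

lemma blocks_le:
  fixes A B' :: "nat \<Rightarrow> bool"
  assumes "Bn * L' \<le> L"
  shows "(\<Sum>\<beta><Bn. ind (\<exists>j\<in>{\<beta>*L'..<\<beta>*L'+L'}. A j) * ind (\<exists>j\<in>{\<beta>*L'..<\<beta>*L'+L'}. B' j))
     \<le> min (real (card {j. j < L \<and> A j})) (real (card {j. j < L \<and> B' j}))"
proof -
  have "(\<Sum>\<beta><Bn. ind (\<exists>j\<in>{\<beta>*L'..<\<beta>*L'+L'}. A j) * ind (\<exists>j\<in>{\<beta>*L'..<\<beta>*L'+L'}. B' j))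
     \<le> (\<Sum>\<beta><Bn. ind (\<exists>j\<in>{\<beta>*L'..<\<beta>*L'+L'}. A j))"
    by (intro sum_mono) (simp add: mult_left_le)
  moreover have "(\<Sum>\<beta><Bn. ind (\<exists>j\<in>{\<beta>*L'..<\<beta>*L'+L'}. A j) * ind (\<exists>j\<in>{\<beta>*L'..<\<beta>*L'+L'}. B' j))
     \<le> (\<Sum>\<beta><Bn. ind (\<exists>j\<in>{\<beta>*L'..<\<beta>*L'+L'}. B' j))"
    by (intro sum_mono) (simp add: mult_left_le_one_le)
  ultimately show ?thesis using blocks_one[OF assms, of A] blocks_one[OF assms, of B'] by linarith
qed


context
  fixes P :: "'x::finite \<Rightarrow> real" and W :: "'x \<Rightarrow> 'y::finite \<Rightarrow> real" and n L :: nat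
  assumes P1: "(\<Sum>x\<in>UNIV. P x) = 1" and W1: "\<forall>x. (\<Sum>y\<in>UNIV. W x y) = 1"
begin

lemma cloud_tot: "length (x::'x list) = n \<Longrightarrow> (\<Sum>c\<in>PiE {..<L} (\<lambda>_. seqs n). (\<Prod>j<L. chan_prob W x (c j))) = 1"
  using prod_sum_PiE[of "{..<L}" "\<lambda>_. seqs n" "\<lambda>j y'. chan_prob W x y'"] chan_sum[OF W1] by simp

lemma E1_one: "E1 n L P W (\<lambda>_ _. 1) = 1"
proof -
  have "E1 n L P W (\<lambda>_ _. 1) = (\<Sum>x\<in>seqs n. seq_prob P x)"
    unfolding E1_def
  proof (intro sum.cong refl)
    fix x :: "'x list" assume "x \<in> seqs n" hence "length x = n" by (simp add: seqs_def)
    thus "seq_prob P x * (\<Sum>c\<in>PiE {..<L} (\<lambda>_. seqs n). (\<Prod>j<L. chan_prob W x (c j)) * 1) = seq_prob P x"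
      using cloud_tot by simp
  qed
  thus ?thesis using seq_sum[OF P1] by simp
qed

lemma E1_diff: "E1 n L P W (\<lambda>x c. 1 - f x c) = 1 - E1 n L P W f"
proof -
  have "E1 n L P W (\<lambda>x c. 1 - f x c) = E1 n L P W (\<lambda>_ _. 1) - E1 n L P W f"
    unfolding E1_def by (simp add: algebra_simps sum_subtractf sum_distrib_left)
  thus ?thesis using E1_one by simp
qed

lemma E1_hit:
  fixes S :: "'x list set" and y :: "'y list"
  assumes S: "S \<subseteq> seqs n" and y: "y \<in> seqs n" and G: "G \<subseteq> {..<L}"
    and const: "\<forall>x\<in>S. seq_prob P x = \<pi> \<and> chan_prob W x y = \<omega>"
  shows "E1 n L P W (\<lambda>x c. ind (x \<in> S) * ind (\<exists>j\<in>G. c j = y)) = real (card S) * \<pi> * (1 - (1 - \<omega>) ^ card G)"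
proof -
  have "E1 n L P W (\<lambda>x c. ind (x \<in> S) * ind (\<exists>j\<in>G. c j = y))
     = (\<Sum>x\<in>seqs n. ind (x \<in> S) * (seq_prob P x * (1 - (1 - chan_prob W x y) ^ card G)))"
  proof (unfold E1_def, intro sum.cong refl)
    fix x :: "'x list" assume x: "x \<in> seqs n"
    have "(\<Sum>c\<in>PiE {..<L} (\<lambda>_. seqs n). (\<Prod>j<L. chan_prob W x (c j)) * (ind (x \<in> S) * ind (\<exists>j\<in>G. c j = y)))
        = ind (x \<in> S) * (\<Sum>c\<in>PiE {..<L} (\<lambda>_. seqs n). (\<Prod>j<L. chan_prob W x (c j)) * (if \<exists>j\<in>G. c j = y then 1 else 0))"
      by (simp add: sum_distrib_left ind_def mult_ac)
    also have "\<dots> = ind (x \<in> S) * (1 - (1 - chan_prob W x y) ^ card G)"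
      using cloud_hit[OF W1 _ y G] x by (simp add: seqs_def)
    finally show "seq_prob P x * (\<Sum>c\<in>PiE {..<L} (\<lambda>_. seqs n). (\<Prod>j<L. chan_prob W x (c j)) * (ind (x \<in> S) * ind (\<exists>j\<in>G. c j = y)))
        = ind (x \<in> S) * (seq_prob P x * (1 - (1 - chan_prob W x y) ^ card G))" by simp
  qed
  also have "\<dots> = (\<Sum>x\<in>S. seq_prob P x * (1 - (1 - chan_prob W x y) ^ card G))"
  proof -
    have "(\<Sum>x\<in>seqs n. ind (x \<in> S) * (seq_prob P x * (1 - (1 - chan_prob W x y) ^ card G)))
        = (\<Sum>x\<in>seqs n. if x \<in> S then seq_prob P x * (1 - (1 - chan_prob W x y) ^ card G) else 0)"
      by (intro sum.cong) (auto simp: ind_def)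
    also have "\<dots> = (\<Sum>x\<in>seqs n \<inter> S. seq_prob P x * (1 - (1 - chan_prob W x y) ^ card G))"
      by (rule sum.inter_restrict[symmetric]) simp
    finally show ?thesis using S by (simp add: Int_absorb1)
  qed
  also have "\<dots> = (\<Sum>x\<in>S. \<pi> * (1 - (1 - \<omega>) ^ card G))"
    using const by (intro sum.cong refl) auto
  finally show ?thesis by simp
qed

end


definition phi :: "nat \<Rightarrow> nat set \<Rightarrow> nat \<Rightarrow> nat \<Rightarrow> 'x list set \<Rightarrow> 'y list \<Rightarrow> nat \<Rightarrow> nat \<Rightarrow> nat \<Rightarrow> 'x list \<Rightarrow> (nat \<Rightarrow> 'y list) \<Rightarrow> real" where
  "phi L J a L' S y b \<beta> m x c = (if m = a \<or> m = b then ind (x \<in> S) * ind (\<exists>j\<in>{\<beta>*L'..<\<beta>*L'+L'}. c j = y)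
      else if m \<in> J then 1 - ind (x \<in> S) * ind (\<exists>j\<in>{..<L}. c j = y) else 1)"

lemma cnt_pos_iff:
  fixes L :: nat
  shows "(1 \<le> card {j. j < L \<and> c j = y}) = (\<exists>j\<in>{..<L}. c j = y)"
proof -
  have "finite {j. j < L \<and> c j = y}" by (rule finite_subset[of _ "{..<L}"]) auto
  thus ?thesis by (auto simp: Suc_le_eq card_gt_0_iff)
qed

lemma pointwise:
  fixes C :: "nat \<Rightarrow> 'x list" and Y :: "nat \<Rightarrow> nat \<Rightarrow> 'y list" and S :: "'x list set" and y :: "'y list"
  assumes a: "a < M" and J: "J \<subseteq> {..<M} - {a}" and BL: "Bn * L' \<le> L"
  shows "(\<Sum>b\<in>J. \<Sum>\<beta><Bn. \<Prod>m<M. phi L J a L' S y b \<beta> m (C m) (Y m))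
     \<le> min (real (card {j. j < L \<and> Y a j = y})) (\<Sum>m\<in>{..<M}-{a}. real (card {j. j < L \<and> Y m j = y}))"
proof -
  define cnt where "cnt m = card {j. j < L \<and> Y m j = y}" for m
  define i where "i m = ind (C m \<in> S)" for m
  define g where "g m = 1 - i m * (if cnt m \<ge> 1 then 1 else 0)" for m
  define H where "H m \<beta> = ind (\<exists>j\<in>{\<beta>*L'..<\<beta>*L'+L'}. Y m j = y)" for m \<beta>
  have fJ: "finite J" using J finite_subset by blast
  have aJ: "a \<notin> J" using J by auto
  have i01: "\<forall>m\<in>J. i m = 0 \<or> i m = 1" unfolding i_def ind_def by auto
  have g01: "0 \<le> g m" for m unfolding g_def i_def ind_def by auto
  have prodeq: "(\<Prod>m<M. phi L J a L' S y b \<beta> m (C m) (Y m)) = (i a * H a \<beta>) * ((i b * H b \<beta>) * (\<Prod>m\<in>J-{b}. g m))"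
    if b: "b \<in> J" for b \<beta>
  proof -
    let ?f = "\<lambda>m. phi L J a L' S y b \<beta> m (C m) (Y m)"
    have "(\<Prod>m<M. ?f m) = (\<Prod>m\<in>insert a J. ?f m)"
      using J a b by (intro prod.mono_neutral_right) (auto simp: phi_def)
    also have "\<dots> = ?f a * (\<Prod>m\<in>J. ?f m)" using fJ aJ by simp
    also have "(\<Prod>m\<in>J. ?f m) = ?f b * (\<Prod>m\<in>J-{b}. ?f m)" using fJ b by (rule prod.remove)
    also have "(\<Prod>m\<in>J-{b}. ?f m) = (\<Prod>m\<in>J-{b}. g m)"
    proof (intro prod.cong refl)
      fix m assume m: "m \<in> J - {b}"
      hence "m \<noteq> a" using aJ by auto
      thus "?f m = g m" using m cnt_pos_iff[of L "Y m" y] unfolding phi_def g_def i_def cnt_def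
        by (auto simp: ind_def)
    qed
    finally show ?thesis unfolding phi_def i_def H_def by simp
  qed
  have "(\<Sum>b\<in>J. \<Sum>\<beta><Bn. \<Prod>m<M. phi L J a L' S y b \<beta> m (C m) (Y m))
      = (\<Sum>b\<in>J. i a * (i b * (\<Prod>m\<in>J-{b}. g m)) * (\<Sum>\<beta><Bn. H a \<beta> * H b \<beta>))"
    by (intro sum.cong refl) (simp add: prodeq sum_distrib_left mult_ac)
  also have "\<dots> \<le> (\<Sum>b\<in>J. i a * (i b * (\<Prod>m\<in>J-{b}. g m)) * min (real (cnt a)) (real (cnt b)))"
  proof (rule sum_mono)
    fix b
    have "(\<Sum>\<beta><Bn. H a \<beta> * H b \<beta>) \<le> min (real (cnt a)) (real (cnt b))"
      unfolding H_def cnt_def by (rule blocks_le[OF BL])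
    moreover have "0 \<le> i a * (i b * (\<Prod>m\<in>J-{b}. g m))"
      unfolding i_def using g01 by (intro mult_nonneg_nonneg prod_nonneg) auto
    ultimately show "i a * (i b * (\<Prod>m\<in>J-{b}. g m)) * (\<Sum>\<beta><Bn. H a \<beta> * H b \<beta>)
        \<le> i a * (i b * (\<Prod>m\<in>J-{b}. g m)) * min (real (cnt a)) (real (cnt b))"
      by (rule mult_left_mono)
  qed
  also have "\<dots> = i a * (\<Sum>b\<in>J. i b * min (real (cnt a)) (real (cnt b)) * (\<Prod>m\<in>J-{b}. g m))"
    by (simp add: sum_distrib_left mult_ac)
  also have "\<dots> \<le> 1 * min (real (cnt a)) (\<Sum>m\<in>J. real (cnt m))"
  proof (rule mult_mono)
    show "i a \<le> 1" unfolding i_def by simp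
    show "(\<Sum>b\<in>J. i b * min (real (cnt a)) (real (cnt b)) * (\<Prod>m\<in>J-{b}. g m)) \<le> min (real (cnt a)) (\<Sum>m\<in>J. real (cnt m))"
      unfolding g_def by (rule exactly_one[OF fJ i01]) simp
  qed (auto intro!: sum_nonneg mult_nonneg_nonneg prod_nonneg simp: i_def g01)
  also have "\<dots> \<le> min (real (cnt a)) (\<Sum>m\<in>{..<M}-{a}. real (cnt m))"
  proof -
    have "(\<Sum>m\<in>J. real (cnt m)) \<le> (\<Sum>m\<in>{..<M}-{a}. real (cnt m))" using J by (intro sum_mono2) auto
    thus ?thesis by (auto simp: min_def)
  qed
  finally show ?thesis unfolding cnt_def .
qed


lemma prod_decomp:
  fixes f :: "nat \<Rightarrow> real"
  assumes a: "a < M" and J: "J \<subseteq> {..<M} - {a}" and b: "b \<in> J"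
    and one: "\<And>m. m < M \<Longrightarrow> m \<notin> insert a J \<Longrightarrow> f m = 1"
  shows "(\<Prod>m<M. f m) = f a * (f b * (\<Prod>m\<in>J-{b}. f m))"
proof -
  have fJ: "finite J" using J finite_subset by blast
  have aJ: "a \<notin> J" using J by auto
  have "(\<Prod>m<M. f m) = (\<Prod>m\<in>insert a J. f m)"
    using J a b one by (intro prod.mono_neutral_right) auto
  also have "\<dots> = f a * (\<Prod>m\<in>J. f m)" using fJ aJ by simp
  also have "(\<Prod>m\<in>J. f m) = f b * (\<Prod>m\<in>J-{b}. f m)" using fJ b by (rule prod.remove)
  finally show ?thesis .
qed

lemma swap_gen:
  fixes w :: "'a \<Rightarrow> 'b \<Rightarrow> real"
  assumes "finite A" "finite K"
  shows "(\<Sum>C\<in>A. \<Sum>Y\<in>B C. w C Y * (\<Sum>k\<in>K. f k C Y)) = (\<Sum>k\<in>K. \<Sum>C\<in>A. \<Sum>Y\<in>B C. w C Y * f k C Y)"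
proof -
  have "(\<Sum>C\<in>A. \<Sum>Y\<in>B C. w C Y * (\<Sum>k\<in>K. f k C Y)) = (\<Sum>C\<in>A. \<Sum>k\<in>K. \<Sum>Y\<in>B C. w C Y * f k C Y)"
    by (intro sum.cong refl) (simp add: sum_distrib_left sum.swap[of _ "B _"])
  also have "\<dots> = (\<Sum>k\<in>K. \<Sum>C\<in>A. \<Sum>Y\<in>B C. w C Y * f k C Y)" by (rule sum.swap)
  finally show ?thesis .
qed

definition Jset :: "nat \<Rightarrow> nat \<Rightarrow> nat set" where
  "Jset N a = (\<lambda>i. if i < a then i else Suc i) ` {..<N}"

lemma Jset_props:
  assumes "a < M" "N \<le> M - 1"
  shows "Jset N a \<subseteq> {..<M} - {a}" "card (Jset N a) = N"
proof -
  show "Jset N a \<subseteq> {..<M} - {a}" using assms unfolding Jset_def by auto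
  have "inj_on (\<lambda>i. if i < a then i else Suc i) {..<N}" by (auto simp: inj_on_def split: if_splits)
  thus "card (Jset N a) = N" unfolding Jset_def by (subst card_image) auto
qed


lemma E1_phi:
  fixes P :: "'x::finite \<Rightarrow> real" and W :: "'x \<Rightarrow> 'y::finite \<Rightarrow> real" and S :: "'x list set" and y :: "'y list"
  assumes P1: "(\<Sum>x\<in>UNIV. P x) = 1" and W1: "\<forall>x. (\<Sum>y\<in>UNIV. W x y) = 1"
    and S: "S \<subseteq> seqs n" and y: "y \<in> seqs n"
    and const: "\<forall>x\<in>S. seq_prob P x = \<pi> \<and> chan_prob W x y = \<omega>"
    and blk: "\<beta> * L' + L' \<le> L" and b: "b \<noteq> a"
  shows "m = a \<or> m = b \<Longrightarrow> E1 n L P W (phi L J a L' S y b \<beta> m) = real (card S) * \<pi> * (1 - (1 - \<omega>) ^ L')"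
    and "m \<noteq> a \<Longrightarrow> m \<noteq> b \<Longrightarrow> m \<in> J \<Longrightarrow> E1 n L P W (phi L J a L' S y b \<beta> m) = 1 - real (card S) * \<pi> * (1 - (1 - \<omega>) ^ L)"
    and "m \<noteq> a \<Longrightarrow> m \<noteq> b \<Longrightarrow> m \<notin> J \<Longrightarrow> E1 n L P W (phi L J a L' S y b \<beta> m) = 1"
proof -
  assume m: "m = a \<or> m = b"
  have "phi L J a L' S y b \<beta> m = (\<lambda>x c. ind (x \<in> S) * ind (\<exists>j\<in>{\<beta>*L'..<\<beta>*L'+L'}. c j = y))"
    using m by (auto simp: phi_def fun_eq_iff)
  moreover have "E1 n L P W (\<lambda>x c. ind (x \<in> S) * ind (\<exists>j\<in>{\<beta>*L'..<\<beta>*L'+L'}. c j = y))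
      = real (card S) * \<pi> * (1 - (1 - \<omega>) ^ card {\<beta>*L'..<\<beta>*L'+L'})"
    by (rule E1_hit[OF P1 W1 S y _ const]) (use blk in auto)
  ultimately show "E1 n L P W (phi L J a L' S y b \<beta> m) = real (card S) * \<pi> * (1 - (1 - \<omega>) ^ L')" by simp
next
  assume m: "m \<noteq> a" "m \<noteq> b" "m \<in> J"
  have "phi L J a L' S y b \<beta> m = (\<lambda>x c. 1 - ind (x \<in> S) * ind (\<exists>j\<in>{..<L}. c j = y))"
    using m by (auto simp: phi_def fun_eq_iff)
  moreover have "E1 n L P W (\<lambda>x c. 1 - ind (x \<in> S) * ind (\<exists>j\<in>{..<L}. c j = y))
      = 1 - real (card S) * \<pi> * (1 - (1 - \<omega>) ^ card {..<L})"
    by (subst E1_diff[OF P1 W1], subst E1_hit[OF P1 W1 S y _ const]) auto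
  ultimately show "E1 n L P W (phi L J a L' S y b \<beta> m) = 1 - real (card S) * \<pi> * (1 - (1 - \<omega>) ^ L)" by simp
next
  assume m: "m \<noteq> a" "m \<noteq> b" "m \<notin> J"
  have "phi L J a L' S y b \<beta> m = (\<lambda>x c. 1)"
    using m by (auto simp: phi_def fun_eq_iff)
  thus "E1 n L P W (phi L J a L' S y b \<beta> m) = 1" using E1_one[OF P1 W1] by simp
qed


lemma main_bound:
  fixes P :: "'x::finite \<Rightarrow> real" and W :: "'x \<Rightarrow> 'y::finite \<Rightarrow> real"
    and S :: "'y list \<Rightarrow> 'x list set" and Ycl :: "'y list set"
  assumes P0: "\<forall>x. 0 \<le> P x" and P1: "(\<Sum>x\<in>UNIV. P x) = 1"
    and W0: "\<forall>x y. 0 \<le> W x y" and W1: "\<forall>x. (\<Sum>y\<in>UNIV. W x y) = 1"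
    and MM: "exp_size n R = M" "M \<ge> 2" and LL: "exp_size n K = L" "L \<ge> 1"
    and Ycl: "Ycl \<subseteq> seqs n"
    and S: "\<forall>y\<in>Ycl. S y \<subseteq> seqs n \<and> card (S y) = \<kappa> \<and> (\<forall>x\<in>S y. seq_prob P x = \<pi> \<and> chan_prob W x y = \<omega>)"
    and N: "1 \<le> N" "N \<le> M - 1" and BL: "Bn * L' \<le> L"
  shows "avg_error P W R K n \<ge> real (card Ycl) * real N * real Bn * (real \<kappa> * \<pi> * (1 - (1 - \<omega>) ^ L'))\<^sup>2
            * (1 - real \<kappa> * \<pi> * (1 - (1 - \<omega>) ^ L)) ^ (N - 1) / (2 * real L)"
proof -
  define CS where "CS = PiE {..<M} (\<lambda>_. seqs n :: 'x list set)"
  define YS where "YS = PiE {..<M} (\<lambda>_. PiE {..<L} (\<lambda>_. seqs n :: 'y list set))"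
  define w where "w C Y = (\<Prod>m<M. seq_prob P (C m)) * (\<Prod>m<M. \<Prod>j<L. chan_prob W (C m) (Y m j))" for C :: "nat \<Rightarrow> 'x list" and Y :: "nat \<Rightarrow> nat \<Rightarrow> 'y list"
  define F where "F Y = (1 / real M) * (\<Sum>m<M. (1 / real L) * (\<Sum>j<L. ml_error M L Y m j))" for Y :: "nat \<Rightarrow> nat \<Rightarrow> 'y list"
  define f where "f a y b \<beta> C Y = (\<Prod>m<M. phi L (Jset N a) a L' (S y) y b \<beta> m (C m) (Y m))"
    for a y b \<beta> and C :: "nat \<Rightarrow> 'x list" and Y :: "nat \<Rightarrow> nat \<Rightarrow> 'y list"
  define G where "G C Y = (1 / (2 * real M * real L)) * (\<Sum>a<M. \<Sum>y\<in>Ycl. \<Sum>b\<in>Jset N a. \<Sum>\<beta><Bn. f a y b \<beta> C Y)" for C :: "nat \<Rightarrow> 'x list" and Y :: "nat \<Rightarrow> nat \<Rightarrow> 'y list"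
  define v where "v = real \<kappa> * \<pi> * (1 - (1 - \<omega>) ^ L')"
  define u where "u = real \<kappa> * \<pi> * (1 - (1 - \<omega>) ^ L)"
  have Mpos: "real M > 0" "M \<ge> 1" using MM by auto
  have Lpos: "real L > 0" using LL by auto
  have fCS: "finite CS" unfolding CS_def by (intro finite_PiE) auto
  have fYS: "finite YS" unfolding YS_def by (intro finite_PiE) auto
  have avg: "avg_error P W R K n = (\<Sum>C\<in>CS. \<Sum>Y\<in>YS. w C Y * F Y)"
    unfolding avg_error_def Let_def MM(1) LL(1) CS_def YS_def w_def F_def ..
  have w0: "0 \<le> w C Y" for C Y unfolding w_def
    using seq_nonneg[OF P0] chan_nonneg[OF W0] by (intro mult_nonneg_nonneg prod_nonneg) auto
  have FG: "F Y \<ge> G C Y" if Y: "Y \<in> YS" for C Y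
  proof -
    have YS': "\<forall>m<M. \<forall>j<L. Y m j \<in> seqs n" using Y unfolding YS_def by auto
    have F: "F Y = (1 / (real M * real L)) * (\<Sum>m<M. \<Sum>j<L. ml_error M L Y m j)"
      unfolding F_def by (simp add: sum_distrib_left)
    have Cc: "(1/2) * (\<Sum>a<M. \<Sum>y\<in>seqs n.
            min (real (card {j. j < L \<and> Y a j = y})) (\<Sum>m\<in>{..<M}-{a}. real (card {j. j < L \<and> Y m j = y})))
         \<le> (\<Sum>m<M. \<Sum>j<L. ml_error M L Y m j)"
      by (rule regroup[OF Mpos(2) _ YS']) auto
    have B: "(\<Sum>a<M. \<Sum>y\<in>Ycl. min (real (card {j. j < L \<and> Y a j = y})) (\<Sum>m\<in>{..<M}-{a}. real (card {j. j < L \<and> Y m j = y})))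
       \<le> (\<Sum>a<M. \<Sum>y\<in>seqs n. min (real (card {j. j < L \<and> Y a j = y})) (\<Sum>m\<in>{..<M}-{a}. real (card {j. j < L \<and> Y m j = y})))"
      using Ycl by (intro sum_mono sum_mono2) (auto intro: sum_nonneg)
    have A: "(\<Sum>a<M. \<Sum>y\<in>Ycl. \<Sum>b\<in>Jset N a. \<Sum>\<beta><Bn. f a y b \<beta> C Y)
       \<le> (\<Sum>a<M. \<Sum>y\<in>Ycl. min (real (card {j. j < L \<and> Y a j = y})) (\<Sum>m\<in>{..<M}-{a}. real (card {j. j < L \<and> Y m j = y})))"
      unfolding f_def by (intro sum_mono pointwise[OF _ _ BL] Jset_props(1)[OF _ N(2)]) auto
    have "(1/2) * (\<Sum>a<M. \<Sum>y\<in>Ycl. \<Sum>b\<in>Jset N a. \<Sum>\<beta><Bn. f a y b \<beta> C Y) \<le> (\<Sum>m<M. \<Sum>j<L. ml_error M L Y m j)"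
      using A B Cc by linarith
    hence "(1 / (real M * real L)) * ((1/2) * (\<Sum>a<M. \<Sum>y\<in>Ycl. \<Sum>b\<in>Jset N a. \<Sum>\<beta><Bn. f a y b \<beta> C Y))
       \<le> (1 / (real M * real L)) * (\<Sum>m<M. \<Sum>j<L. ml_error M L Y m j)"
      using Mpos Lpos by (intro mult_left_mono) auto
    thus ?thesis unfolding G_def F by (simp add: field_simps)
  qed
  have "avg_error P W R K n \<ge> (\<Sum>C\<in>CS. \<Sum>Y\<in>YS. w C Y * G C Y)"
    unfolding avg using FG w0 by (intro sum_mono mult_left_mono) auto
  also have "(\<Sum>C\<in>CS. \<Sum>Y\<in>YS. w C Y * G C Y) = (1 / (2 * real M * real L)) *
      (\<Sum>a<M. \<Sum>y\<in>Ycl. \<Sum>b\<in>Jset N a. \<Sum>\<beta><Bn. \<Sum>C\<in>CS. \<Sum>Y\<in>YS. w C Y * f a y b \<beta> C Y)"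
  proof -
    have fY: "finite Ycl" using finite_subset[OF Ycl] by simp
    have fJ: "finite (Jset N a)" for a unfolding Jset_def by (rule finite_imageI) simp
    have "(\<Sum>C\<in>CS. \<Sum>Y\<in>YS. w C Y * G C Y) = (1 / (2 * real M * real L)) *
      (\<Sum>C\<in>CS. \<Sum>Y\<in>YS. w C Y * (\<Sum>a<M. \<Sum>y\<in>Ycl. \<Sum>b\<in>Jset N a. \<Sum>\<beta><Bn. f a y b \<beta> C Y))"
    proof -
      have "(\<Sum>C\<in>CS. \<Sum>Y\<in>YS. w C Y * G C Y) = (\<Sum>C\<in>CS. \<Sum>Y\<in>YS. (1 / (2 * real M * real L)) * (w C Y * (\<Sum>a<M. \<Sum>y\<in>Ycl. \<Sum>b\<in>Jset N a. \<Sum>\<beta><Bn. f a y b \<beta> C Y)))"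
        unfolding G_def by (simp only: mult_ac)
      thus ?thesis by (simp only: sum_distrib_left[symmetric])
    qed
    also have "(\<Sum>C\<in>CS. \<Sum>Y\<in>YS. w C Y * (\<Sum>a<M. \<Sum>y\<in>Ycl. \<Sum>b\<in>Jset N a. \<Sum>\<beta><Bn. f a y b \<beta> C Y))
       = (\<Sum>a<M. \<Sum>y\<in>Ycl. \<Sum>b\<in>Jset N a. \<Sum>\<beta><Bn. \<Sum>C\<in>CS. \<Sum>Y\<in>YS. w C Y * f a y b \<beta> C Y)"
      by (simp only: swap_gen[OF fCS finite_lessThan] swap_gen[OF fCS fY] swap_gen[OF fCS fJ] swap_gen[OF fCS finite_lessThan])
    finally show ?thesis .
  qed
  also have "(\<Sum>a<M. \<Sum>y\<in>Ycl. \<Sum>b\<in>Jset N a. \<Sum>\<beta><Bn. \<Sum>C\<in>CS. \<Sum>Y\<in>YS. w C Y * f a y b \<beta> C Y)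
      = (\<Sum>a<M. \<Sum>y\<in>Ycl. \<Sum>b\<in>Jset N a. \<Sum>\<beta><Bn. v\<^sup>2 * (1 - u) ^ (N - 1))"
  proof (intro sum.cong refl)
    fix a y b \<beta> assume a: "a \<in> {..<M}" and y: "y \<in> Ycl" and b: "b \<in> Jset N a" and be: "\<beta> \<in> {..<Bn}"
    have J: "Jset N a \<subseteq> {..<M} - {a}" "card (Jset N a) = N" using Jset_props[of a M N] a N by auto
    have ba: "b \<noteq> a" using J b by auto
    have Sy: "S y \<subseteq> seqs n" "card (S y) = \<kappa>" "\<forall>x\<in>S y. seq_prob P x = \<pi> \<and> chan_prob W x y = \<omega>"
      using S y by auto
    have yn: "y \<in> seqs n" using Ycl y by auto
    have blk: "\<beta> * L' + L' \<le> L"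
    proof -
      have "Suc \<beta> * L' \<le> Bn * L'" using be by (intro mult_le_mono1) auto
      thus ?thesis using BL by simp
    qed
    note E = E1_phi[OF P1 W1 Sy(1) yn Sy(3) blk ba, where J="Jset N a"]
    have "(\<Sum>C\<in>CS. \<Sum>Y\<in>YS. w C Y * f a y b \<beta> C Y) = (\<Prod>m<M. E1 n L P W (phi L (Jset N a) a L' (S y) y b \<beta> m))"
      unfolding CS_def YS_def w_def f_def by (rule factor_E)
    also have "\<dots> = E1 n L P W (phi L (Jset N a) a L' (S y) y b \<beta> a) * (E1 n L P W (phi L (Jset N a) a L' (S y) y b \<beta> b) *
         (\<Prod>m\<in>Jset N a - {b}. E1 n L P W (phi L (Jset N a) a L' (S y) y b \<beta> m)))"
      using a J b E(3) by (intro prod_decomp) auto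
    also have "(\<Prod>m\<in>Jset N a - {b}. E1 n L P W (phi L (Jset N a) a L' (S y) y b \<beta> m)) = (\<Prod>m\<in>Jset N a - {b}. 1 - u)"
      using E(2) J ba unfolding u_def Sy(2) by (intro prod.cong refl) auto
    also have "\<dots> = (1 - u) ^ (N - 1)" using J b by (simp add: card_Diff_singleton)
    finally show "(\<Sum>C\<in>CS. \<Sum>Y\<in>YS. w C Y * f a y b \<beta> C Y) = v\<^sup>2 * (1 - u) ^ (N - 1)"
      using E(1)[of a] E(1)[of b] unfolding v_def Sy(2) by (simp add: power2_eq_square)
  qed
  also have "\<dots> = real M * (real (card Ycl) * (real N * (real Bn * (v\<^sup>2 * (1 - u) ^ (N - 1)))))"
  proof -
    have "(\<Sum>y\<in>Ycl. \<Sum>b\<in>Jset N a. \<Sum>\<beta><Bn. v\<^sup>2 * (1 - u) ^ (N - 1)) = real (card Ycl) * (real N * (real Bn * (v\<^sup>2 * (1 - u) ^ (N - 1))))"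
      if "a \<in> {..<M}" for a
    proof -
      have "card (Jset N a) = N" using Jset_props(2)[of a M N] N that by auto
      thus ?thesis by (simp only: sum_constant card_lessThan)
    qed
    hence "(\<Sum>a<M. \<Sum>y\<in>Ycl. \<Sum>b\<in>Jset N a. \<Sum>\<beta><Bn. v\<^sup>2 * (1 - u) ^ (N - 1)) = (\<Sum>a<M. real (card Ycl) * (real N * (real Bn * (v\<^sup>2 * (1 - u) ^ (N - 1)))))"
      by (rule sum.cong[OF refl])
    thus ?thesis by (simp only: sum_constant card_lessThan)
  qed
  finally show ?thesis unfolding v_def u_def using Mpos Lpos by (simp add: field_simps)
qed


lemma floor_half: assumes "t \<ge> (1::real)" shows "real (nat \<lfloor>t\<rfloor>) \<ge> t / 2" "nat \<lfloor>t\<rfloor> \<ge> 1" "real (nat \<lfloor>t\<rfloor>) \<le> t"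
proof -
  have a: "of_int \<lfloor>t\<rfloor> > t - 1" "of_int \<lfloor>t\<rfloor> \<le> t" by linarith+
  have b: "\<lfloor>t\<rfloor> \<ge> 1" using assms by linarith
  show "nat \<lfloor>t\<rfloor> \<ge> 1" using b by linarith
  show "real (nat \<lfloor>t\<rfloor>) \<ge> t / 2" using a b by linarith
  show "real (nat \<lfloor>t\<rfloor>) \<le> t" using a b by linarith
qed

lemma bern: assumes "0 \<le> z" "z \<le> (1::real)" shows "(1 - z) ^ k \<ge> 1 - real k * z"
  using Bernoulli_inequality[of "-z" k] assms by simp

lemma N_choice:
  fixes s q :: real and M :: nat
  assumes s: "0 < s" "s \<le> 1" and q: "0 < q" "q \<le> 1" and M: "M \<ge> 2"
  shows "\<exists>N. 1 \<le> N \<and> N \<le> M - 1 \<and> real N * s * (1 - s * q) ^ (N - 1) \<ge> (1/8) * min (real (M - 1) * s) (1 / q)"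
proof -
  define z where "z = s * q"
  have z: "0 < z" "z \<le> 1" unfolding z_def using s q by (auto intro: mult_le_one)
  have M1: "real (M - 1) \<ge> 1" using M by simp
  show ?thesis
  proof (cases "real (M - 1) * z \<le> 1/2")
    case True
    have "(1 - z) ^ (M - 1 - 1) \<ge> 1 - real (M - 1 - 1) * z" using z by (intro bern) auto
    moreover have "real (M - 1 - 1) * z \<le> real (M - 1) * z" using z by (intro mult_right_mono) auto
    ultimately have p: "(1 - z) ^ (M - 1 - 1) \<ge> 1/2" using True by linarith
    have "real (M - 1) * s * (1 - z) ^ (M - 1 - 1) \<ge> real (M - 1) * s * (1/2)"
      using p s M1 by (intro mult_left_mono) auto
    moreover have "(1/8) * min (real (M - 1) * s) (1 / q) \<le> real (M - 1) * s * (1/2)"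
    proof -
      have "min (real (M - 1) * s) (1 / q) \<le> real (M - 1) * s" by simp
      moreover have "0 \<le> real (M - 1) * s" using s by simp
      ultimately show ?thesis by linarith
    qed
    ultimately have "real (M - 1) * s * (1 - s * q) ^ (M - 1 - 1) \<ge> (1/8) * min (real (M - 1) * s) (1 / q)"
      unfolding z_def by linarith
    moreover have "1 \<le> M - 1" using M by simp
    ultimately show ?thesis by blast
  next
    case False
    show ?thesis
    proof (cases "z > 1/2")
      case True
      have "1 / q < 2 * s" using True q s unfolding z_def by (simp add: field_simps)
      moreover have "min (real (M - 1) * s) (1 / q) \<le> 1 / q" by simp
      ultimately have "(1/8) * min (real (M - 1) * s) (1 / q) \<le> s" using s by linarith
      hence "real 1 * s * (1 - s * q) ^ (1 - 1) \<ge> (1/8) * min (real (M - 1) * s) (1 / q)" by simp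
      moreover have "1 \<le> (1::nat)" "1 \<le> M - 1" using M by auto
      ultimately show ?thesis by blast
    next
      case zs: False
      define t where "t = 1 / (2 * z)"
      have t1: "t \<ge> 1" unfolding t_def using z zs by (simp add: field_simps)
      define N where "N = nat \<lfloor>t\<rfloor>"
      have N: "real N \<ge> t / 2" "N \<ge> 1" "real N \<le> t" unfolding N_def using floor_half[OF t1] by auto
      have Nz: "real N * z \<le> 1/2" using N(3) z unfolding t_def by (simp add: field_simps)
      have "real N * z < real (M - 1) * z" using Nz False by linarith
      hence "real N < real (M - 1)" using z by (simp add: mult_less_cancel_right)
      hence NM: "N \<le> M - 1" by linarith
      have "(1 - z) ^ (N - 1) \<ge> 1 - real (N - 1) * z" using z by (intro bern) auto
      moreover have "real (N - 1) * z \<le> real N * z" using z by (intro mult_right_mono) auto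
      ultimately have p: "(1 - z) ^ (N - 1) \<ge> 1/2" using Nz by linarith
      have Ns: "real N * s \<ge> 1 / (4 * q)"
      proof -
        have "real N * s \<ge> t / 2 * s" using N(1) s by (intro mult_right_mono) auto
        also have "t / 2 * s = 1 / (4 * q)" unfolding t_def z_def using s q by (simp add: field_simps)
        finally show ?thesis .
      qed
      have "real N * s * (1 - z) ^ (N - 1) \<ge> 1 / (4 * q) * (1/2)"
        using Ns p q s by (intro mult_mono) auto
      moreover have "(1/8) * min (real (M - 1) * s) (1 / q) \<le> 1 / (4 * q) * (1/2)"
        using q by (simp add: min_def field_simps)
      ultimately have "real N * s * (1 - s * q) ^ (N - 1) \<ge> (1/8) * min (real (M - 1) * s) (1 / q)"
        unfolding z_def by (rule order.trans[rotated])
      thus ?thesis using N(2) NM by blast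
    qed
  qed
qed

lemma pow_exp: assumes "0 \<le> w" "w \<le> (1::real)" shows "(1 - w) ^ m \<le> exp (- (w * real m))"
proof -
  have "(1 - w) ^ m \<le> exp (- w) ^ m"
    using assms by (intro power_mono) (auto simp: exp_ge_add_one_self[of "-w", simplified])
  also have "\<dots> = exp (- (w * real m))" by (simp add: exp_of_nat_mult[symmetric] mult.commute)
  finally show ?thesis .
qed

lemma q_small: assumes "0 \<le> w" "w \<le> (1::real)" "real L * w \<le> 1"
  shows "1 - (1 - w) ^ L \<ge> real L * w / 2"
proof -
  define l where "l = real L * w"
  have l0: "0 \<le> l" using assms unfolding l_def by simp
  have "exp l \<ge> 1 + l" by (rule exp_ge_add_one_self)
  hence "exp (- l) \<le> 1 / (1 + l)" using l0 by (simp add: exp_minus field_simps)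
  moreover have "(1 - w) ^ L \<le> exp (- l)" unfolding l_def using pow_exp[OF assms(1,2), of L] by (simp add: mult.commute)
  moreover have "1 / (1 + l) \<le> 1 - l / 2"
  proof -
    have l1: "l \<le> 1" using assms(3) unfolding l_def .
    have ll: "l * l \<le> l" using mult_left_le[OF l1 l0] .
    have "1 \<le> (1 - l / 2) * (1 + l)" using ll by (simp add: algebra_simps)
    thus ?thesis using l0 by (simp add: divide_le_eq)
  qed
  ultimately show ?thesis unfolding l_def by linarith
qed

lemma block_choice:
  fixes w :: real and L :: nat
  assumes w: "0 < w" "w \<le> 1" and lam: "real L * w > 1"
  shows "\<exists>Bn L'. Bn * L' \<le> L \<and> real Bn * (1 - (1 - w) ^ L')\<^sup>2 \<ge> real L * w / 18"
proof -
  have t1: "1 / w \<ge> 1" using w by (simp add: field_simps)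
  define L' where "L' = nat \<lfloor>1 / w\<rfloor>"
  have L': "real L' \<ge> 1 / w / 2" "L' \<ge> 1" "real L' \<le> 1 / w" unfolding L'_def using floor_half[OF t1] by auto
  have wL': "w * real L' \<ge> 1/2" using L'(1) w by (simp add: field_simps)
  have "(1 - w) ^ L' \<le> exp (- (w * real L'))" using pow_exp w by auto
  also have "\<dots> \<le> exp (- (1/2))" using wL' by simp
  also have "exp (- (1/2)) \<le> (2/3::real)"
  proof -
    have "exp (1/2::real) \<ge> 1 + 1/2" by (rule exp_ge_add_one_self)
    thus ?thesis by (simp add: exp_minus field_simps)
  qed
  finally have q': "1 - (1 - w) ^ L' \<ge> 1/3" by simp
  define Bn where "Bn = L div L'"
  have BL: "Bn * L' \<le> L" unfolding Bn_def by simp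
  have LL': "real L / real L' \<ge> real L * w"
  proof -
    have "real L * w * real L' \<le> real L * w * (1 / w)" using L'(3) lam w by (intro mult_left_mono) auto
    also have "\<dots> = real L" using w by simp
    finally show ?thesis using L'(2) by (simp add: field_simps)
  qed
  have "real Bn \<ge> real L * w / 2"
  proof -
    have "real Bn = real_of_int \<lfloor>real L / real L'\<rfloor>" unfolding Bn_def by (simp add: floor_divide_of_nat_eq)
    also have "\<dots> = real (nat \<lfloor>real L / real L'\<rfloor>)" by simp
    finally have e: "real Bn = real (nat \<lfloor>real L / real L'\<rfloor>)" .
    have "real L / real L' \<ge> 1" using LL' lam by linarith
    from floor_half(1)[OF this] e have "real L / real L' / 2 \<le> real Bn" by simp
    moreover have "real L * w / 2 \<le> real L / real L' / 2" using LL' by simp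
    ultimately show ?thesis by linarith
  qed
  moreover have "(1 - (1 - w) ^ L')\<^sup>2 \<ge> (1/3)\<^sup>2" using q' by (intro power_mono) auto
  ultimately have "real Bn * (1 - (1 - w) ^ L')\<^sup>2 \<ge> real L * w / 2 * (1/3)\<^sup>2"
    using lam w by (intro mult_mono) auto
  thus ?thesis using BL by (intro exI[of _ Bn] exI[of _ L']) (auto simp: power2_eq_square)
qed


lemma per_n_bound:
  fixes P :: "'x::finite \<Rightarrow> real" and W :: "'x \<Rightarrow> 'y::finite \<Rightarrow> real"
    and S :: "'y list \<Rightarrow> 'x list set" and Ycl :: "'y list set"
  assumes P0: "\<forall>x. 0 \<le> P x" and P1: "(\<Sum>x\<in>UNIV. P x) = 1"
    and W0: "\<forall>x y. 0 \<le> W x y" and W1: "\<forall>x. (\<Sum>y\<in>UNIV. W x y) = 1"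
    and MM: "exp_size n R = M" "M \<ge> 2" and LL: "exp_size n K = L" "L \<ge> 1"
    and Ycl: "Ycl \<subseteq> seqs n"
    and S: "\<forall>y\<in>Ycl. S y \<subseteq> seqs n \<and> card (S y) = \<kappa> \<and> (\<forall>x\<in>S y. seq_prob P x = \<pi> \<and> chan_prob W x y = \<omega>)"
    and s: "0 < real \<kappa> * \<pi>" "real \<kappa> * \<pi> \<le> 1" and w: "0 < \<omega>" "\<omega> \<le> 1"
  shows "avg_error P W R K n \<ge> real (card Ycl) * (real \<kappa> * \<pi>) * \<omega> *
           min (real (M - 1) * (real \<kappa> * \<pi>) * min (real L * \<omega>) 1 / 2) 1 / 288"
proof -
  define s where "s = real \<kappa> * \<pi>"
  define q where "q = 1 - (1 - \<omega>) ^ L"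
  define T where "T = real (card Ycl)"
  define lam where "lam = real L * \<omega>"
  have s': "0 < s" "s \<le> 1" using s unfolding s_def by auto
  have lam0: "0 \<le> lam" unfolding lam_def using w by simp
  have T0: "0 \<le> T" unfolding T_def by simp
  have Lp: "real L > 0" using LL by simp
  have q: "0 < q" "q \<le> 1"
  proof -
    have "(1 - \<omega>) ^ L \<le> (1 - \<omega>) ^ 1" using w LL by (intro power_decreasing) auto
    thus "0 < q" using w unfolding q_def by simp
    show "q \<le> 1" using w unfolding q_def by simp
  qed
  obtain N where N: "1 \<le> N" "N \<le> M - 1" and Nb: "real N * s * (1 - s * q) ^ (N - 1) \<ge> (1/8) * min (real (M - 1) * s) (1 / q)"
    using N_choice[OF s' q MM(2)] by blast
  define A where "A = real N * s * (1 - s * q) ^ (N - 1)"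
  have minpos: "0 \<le> min (real (M - 1) * s) (1 / q)" using s' q by simp
  have key: "avg_error P W R K n \<ge> T * A * s * h / (2 * real L)"
    if BL: "Bn * L' \<le> L" and h: "h = real Bn * (1 - (1 - \<omega>) ^ L')\<^sup>2" for Bn L' h
  proof -
    have "avg_error P W R K n \<ge> real (card Ycl) * real N * real Bn * (s * (1 - (1 - \<omega>) ^ L'))\<^sup>2
            * (1 - s * q) ^ (N - 1) / (2 * real L)"
      using main_bound[OF P0 P1 W0 W1 MM LL Ycl S N BL] unfolding s_def q_def by simp
    also have "real (card Ycl) * real N * real Bn * (s * (1 - (1 - \<omega>) ^ L'))\<^sup>2 * (1 - s * q) ^ (N - 1) / (2 * real L)
        = T * A * s * h / (2 * real L)"
      unfolding T_def A_def h by (simp add: power2_eq_square mult_ac)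
    finally show ?thesis .
  qed
  have A: "A \<ge> (1/8) * min (real (M - 1) * s) (1 / q)" using Nb unfolding A_def .
  show ?thesis
  proof (cases "lam \<le> 1")
    case True
    have qlam: "q \<ge> lam / 2" unfolding q_def lam_def using q_small[OF less_imp_le[OF w(1)] w(2)] True lam_def by auto
    have "avg_error P W R K n \<ge> T * A * s * q\<^sup>2 / (2 * real L)"
      using key[of 1 L "q\<^sup>2"] unfolding q_def by simp
    moreover have "T * A * s * q\<^sup>2 / (2 * real L) \<ge> T * ((1/8) * min (real (M - 1) * s) (1 / q)) * s * q\<^sup>2 / (2 * real L)"
      using A T0 s' Lp by (intro divide_right_mono mult_right_mono mult_left_mono) auto
    moreover have "(1/8) * min (real (M - 1) * s) (1 / q) * q = (1/8) * min (real (M - 1) * s * q) 1"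
    proof -
      have g: "min a (1 / q) * q = min (a * q) 1" for a :: real
      proof (cases "a \<le> 1 / q")
        case True hence "a * q \<le> 1" using q by (simp add: field_simps)
        thus ?thesis using True by simp
      next
        case False hence "\<not> a * q \<le> 1" using q by (simp add: field_simps)
        thus ?thesis using False q by simp
      qed
      show ?thesis using g[of "real (M - 1) * s"] by simp
    qed
    moreover have "min (real (M - 1) * s * q) 1 \<ge> min (real (M - 1) * s * (lam / 2)) 1"
      using qlam s' by (intro min.mono mult_left_mono) auto
    ultimately have "avg_error P W R K n \<ge> T * ((1/8) * min (real (M - 1) * s * (lam / 2)) 1) * s * q / (2 * real L)"
    proof -
      assume a1: "avg_error P W R K n \<ge> T * A * s * q\<^sup>2 / (2 * real L)"
        and a2: "T * A * s * q\<^sup>2 / (2 * real L) \<ge> T * ((1/8) * min (real (M - 1) * s) (1 / q)) * s * q\<^sup>2 / (2 * real L)"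
        and a3: "(1/8) * min (real (M - 1) * s) (1 / q) * q = (1/8) * min (real (M - 1) * s * q) 1"
        and a4: "min (real (M - 1) * s * q) 1 \<ge> min (real (M - 1) * s * (lam / 2)) 1"
      have "T * ((1/8) * min (real (M - 1) * s) (1 / q)) * s * q\<^sup>2 / (2 * real L)
          = T * ((1/8) * min (real (M - 1) * s * q) 1) * s * q / (2 * real L)"
        using a3[symmetric] by (simp add: power2_eq_square mult_ac)
      also have "\<dots> \<ge> T * ((1/8) * min (real (M - 1) * s * (lam / 2)) 1) * s * q / (2 * real L)"
        using a4 T0 s' q Lp by (intro divide_right_mono mult_right_mono mult_left_mono) auto
      finally show ?thesis using a1 a2 by linarith
    qed
    moreover have "T * ((1/8) * min (real (M - 1) * s * (lam / 2)) 1) * s * q / (2 * real L)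
        \<ge> T * ((1/8) * min (real (M - 1) * s * (lam / 2)) 1) * s * (lam / 2) / (2 * real L)"
      using qlam T0 s' Lp lam0 by (intro divide_right_mono mult_left_mono mult_nonneg_nonneg) auto
    moreover have "T * ((1/8) * min (real (M - 1) * s * (lam / 2)) 1) * s * (lam / 2) / (2 * real L)
        = T * s * \<omega> * min (real (M - 1) * s * min lam 1 / 2) 1 / 32"
      using True Lp unfolding lam_def by (simp add: field_simps min_def)
    moreover have "T * s * \<omega> * min (real (M - 1) * s * min lam 1 / 2) 1 / 32 \<ge> T * s * \<omega> * min (real (M - 1) * s * min lam 1 / 2) 1 / 288"
      using T0 s' w lam0 by (intro divide_left_mono mult_nonneg_nonneg) auto
    ultimately show ?thesis unfolding T_def s_def lam_def by linarith
  next
    case False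
    obtain Bn L' where BL: "Bn * L' \<le> L" and hb: "real Bn * (1 - (1 - \<omega>) ^ L')\<^sup>2 \<ge> lam / 18"
      using block_choice[OF w, of L] False unfolding lam_def by auto
    have k: "avg_error P W R K n \<ge> T * A * s * (real Bn * (1 - (1 - \<omega>) ^ L')\<^sup>2) / (2 * real L)"
      using key[OF BL refl] .
    have Apos: "0 \<le> A" using A minpos by linarith
    have "T * A * s * (real Bn * (1 - (1 - \<omega>) ^ L')\<^sup>2) / (2 * real L) \<ge> T * A * s * (lam / 18) / (2 * real L)"
      using hb T0 Apos s' Lp by (intro divide_right_mono mult_left_mono mult_nonneg_nonneg) auto
    moreover have "T * A * s * (lam / 18) / (2 * real L) \<ge> T * ((1/8) * min (real (M - 1) * s) 1) * s * (lam / 18) / (2 * real L)"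
    proof -
      have "min (real (M - 1) * s) 1 \<le> min (real (M - 1) * s) (1 / q)" using q by (intro min.mono) (auto simp: field_simps)
      hence "(1/8) * min (real (M - 1) * s) 1 \<le> A" using A by linarith
      thus ?thesis using T0 s' Lp False by (intro divide_right_mono mult_right_mono mult_left_mono) auto
    qed
    moreover have "T * ((1/8) * min (real (M - 1) * s) 1) * s * (lam / 18) / (2 * real L) = T * s * \<omega> * min (real (M - 1) * s) 1 / 288"
      using Lp unfolding lam_def by (simp add: field_simps)
    moreover have "min (real (M - 1) * s * min lam 1 / 2) 1 \<le> min (real (M - 1) * s) 1"
      using False s' by (intro min.mono) (auto simp: min_def)
    hence "T * s * \<omega> * min (real (M - 1) * s * min lam 1 / 2) 1 / 288 \<le> T * s * \<omega> * min (real (M - 1) * s) 1 / 288"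
      using T0 s' w lam0 by (intro divide_right_mono mult_left_mono mult_nonneg_nonneg) auto
    ultimately show ?thesis using k unfolding T_def s_def lam_def by linarith
  qed
qed


lemma prod_nth_mset: "(\<Prod>i<length xs. f (xs ! i)) = prod_mset (image_mset f (mset xs))"
proof (induction xs)
  case (Cons a xs)
  show ?case by (simp only: length_Cons prod.lessThan_Suc_shift) (simp add: Cons)
qed simp

definition Ycl :: "('y \<times> 'x) multiset \<Rightarrow> 'y list set" where
  "Ycl k = {y. mset y = image_mset fst k}"

definition Sk :: "('y \<times> 'x) multiset \<Rightarrow> 'y list \<Rightarrow> 'x list set" where
  "Sk k y = {x. length x = size k \<and> mset (zip y x) = k}"

lemma Ycl_seqs: "Ycl k \<subseteq> seqs (size k)"
  unfolding Ycl_def seqs_def by (auto dest: arg_cong[of _ _ size])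

lemma Sk_seqs: "Sk k y \<subseteq> seqs (size k)"
  unfolding Sk_def seqs_def by auto

lemma finite_Ycl: "finite (Ycl (k :: ('y::finite \<times> 'x) multiset))"
  by (rule finite_subset[OF Ycl_seqs finite_seqs])

lemma finite_Sk: "finite (Sk (k :: ('y \<times> 'x::finite) multiset) y)"
  by (rule finite_subset[OF Sk_seqs finite_seqs])

lemma seq_prob_type:
  assumes "y \<in> Ycl k" "x \<in> Sk k y"
  shows "seq_prob P x = prod_mset (image_mset (\<lambda>p. P (snd p)) k)"
proof -
  have ly: "length y = size k" using assms(1) unfolding Ycl_def by (auto dest: arg_cong[of _ _ size])
  have lx: "length x = size k" and z: "mset (zip y x) = k" using assms(2) unfolding Sk_def by auto
  have "mset x = image_mset snd k"
    using z ly lx by (metis map_snd_zip mset_map)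
  thus ?thesis unfolding seq_prob_def prod_nth_mset by (simp add: image_mset.compositionality o_def)
qed

lemma chan_prob_type:
  assumes "y \<in> Ycl k" "x \<in> Sk k y"
  shows "chan_prob W x y = prod_mset (image_mset (\<lambda>p. W (snd p) (fst p)) k)"
proof -
  have ly: "length y = size k" using assms(1) unfolding Ycl_def by (auto dest: arg_cong[of _ _ size])
  have lx: "length x = size k" and z: "mset (zip y x) = k" using assms(2) unfolding Sk_def by auto
  have "(\<Prod>i<length x. W (x ! i) (y ! i)) = (\<Prod>i<length (zip y x). (\<lambda>p. W (snd p) (fst p)) (zip y x ! i))"
    using lx ly by simp
  also have "\<dots> = prod_mset (image_mset (\<lambda>p. W (snd p) (fst p)) k)"
    using prod_nth_mset[of "\<lambda>p. W (snd p) (fst p)" "zip y x"] z by simp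
  finally show ?thesis unfolding chan_prob_def .
qed

lemma card_Sk_le:
  fixes k :: "('y \<times> 'x::finite) multiset"
  assumes y: "y \<in> Ycl k" and y': "y' \<in> Ycl k"
  shows "card (Sk k y') \<le> card (Sk k y)"
proof -
  have "mset y = mset y'" using y y' unfolding Ycl_def by simp
  then obtain \<sigma> where \<sigma>: "\<sigma> permutes {..<length y'}" "permute_list \<sigma> y' = y" by (rule mset_eq_permutation)
  have ly': "length y' = size k" using y' unfolding Ycl_def by (auto dest: arg_cong[of _ _ size])
  have maps: "permute_list \<sigma> x \<in> Sk k y" if x: "x \<in> Sk k y'" for x
  proof -
    have lx: "length x = size k" and z: "mset (zip y' x) = k" using x unfolding Sk_def by auto
    have "zip y (permute_list \<sigma> x) = permute_list \<sigma> (zip y' x)"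
      using \<sigma> lx ly' by (subst permute_list_zip) auto
    hence "mset (zip y (permute_list \<sigma> x)) = k"
      using z \<sigma> lx ly' by (simp add: mset_permute_list)
    thus ?thesis using lx unfolding Sk_def by simp
  qed
  have inj: "inj_on (permute_list \<sigma>) (Sk k y')"
  proof (rule inj_onI)
    fix x1 x2 assume x1: "x1 \<in> Sk k y'" and x2: "x2 \<in> Sk k y'" and e: "permute_list \<sigma> x1 = permute_list \<sigma> x2"
    have l: "length x1 = length y'" "length x2 = length y'" using x1 x2 ly' unfolding Sk_def by auto
    show "x1 = x2"
    proof (rule nth_equalityI)
      show "length x1 = length x2" using l by simp
      fix i assume i: "i < length x1"
      have "i \<in> \<sigma> ` {..<length y'}" using permutes_image[OF \<sigma>(1)] i l by auto
      then obtain j where j: "j < length y'" "\<sigma> j = i" by auto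
      have "permute_list \<sigma> x1 ! j = permute_list \<sigma> x2 ! j" using e by simp
      thus "x1 ! i = x2 ! i" using j l \<sigma>(1) by (simp add: permute_list_nth)
    qed
  qed
  show ?thesis
    by (rule card_inj_on_le[OF inj]) (use maps finite_Sk in auto)
qed

lemma card_Sk_const:
  assumes "y \<in> Ycl k" "y' \<in> Ycl k"
  shows "card (Sk (k :: ('y \<times> 'x::finite) multiset) y') = card (Sk k y)"
  using card_Sk_le[OF assms] card_Sk_le[OF assms(2,1)] by simp

lemma card_joint:
  fixes k :: "('y::finite \<times> 'x::finite) multiset"
  shows "card {zs. mset zs = k} = (\<Sum>y\<in>Ycl k. card (Sk k y))"
proof -
  have bij: "bij_betw (\<lambda>zs. (map fst zs, map snd zs)) {zs. mset zs = k} (SIGMA y:Ycl k. Sk k y)"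
  proof (rule bij_betwI[where g = "\<lambda>(y, x). zip y x"])
    show "(\<lambda>zs. (map fst zs, map snd zs)) \<in> {zs. mset zs = k} \<rightarrow> (SIGMA y:Ycl k. Sk k y)"
      unfolding Ycl_def Sk_def by (auto simp: zip_map_fst_snd dest: arg_cong[of _ _ size])
    show "(\<lambda>(y, x). zip y x) \<in> (SIGMA y:Ycl k. Sk k y) \<rightarrow> {zs. mset zs = k}"
      unfolding Sk_def by auto
    show "(case (map fst zs, map snd zs) of (y, x) \<Rightarrow> zip y x) = zs" for zs by (simp add: zip_map_fst_snd)
    show "(map fst (case yx of (y, x) \<Rightarrow> zip y x), map snd (case yx of (y, x) \<Rightarrow> zip y x)) = yx"
      if "yx \<in> (SIGMA y:Ycl k. Sk k y)" for yx
      using that unfolding Ycl_def Sk_def by (auto dest: arg_cong[of _ _ size])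
  qed
  have "card {zs. mset zs = k} = card (SIGMA y:Ycl k. Sk k y)" using bij_betw_same_card[OF bij] .
  also have "\<dots> = (\<Sum>y\<in>Ycl k. card (Sk k y))" by (rule card_SigmaI) (auto simp: finite_Ycl finite_Sk)
  finally show ?thesis .
qed


lemma prod_mset_pos: "(\<forall>p\<in>#k. 0 < f p) \<Longrightarrow> 0 < prod_mset (image_mset f k :: real multiset)"
  by (induction k) auto

lemma prod_mset_le1: "(\<forall>p\<in>#k. 0 \<le> f p \<and> f p \<le> 1) \<Longrightarrow> 0 \<le> prod_mset (image_mset f k :: real multiset) \<and> prod_mset (image_mset f k :: real multiset) \<le> 1"
proof (induction k)
  case (add x k)
  thus ?case by (auto intro: mult_le_one)
qed simp

lemma per_type_bound:
  fixes P :: "'x::finite \<Rightarrow> real" and W :: "'x \<Rightarrow> 'y::finite \<Rightarrow> real" and k :: "('y \<times> 'x) multiset"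
  assumes P0: "\<forall>x. 0 \<le> P x" and P1: "(\<Sum>x\<in>UNIV. P x) = 1"
    and W0: "\<forall>x y. 0 \<le> W x y" and W1: "\<forall>x. (\<Sum>y\<in>UNIV. W x y) = 1"
    and MM: "exp_size n R = M" "M \<ge> 2" and LL: "exp_size n K = L" "L \<ge> 1"
    and n: "size k = n" and supp: "\<forall>p\<in>#k. 0 < P (snd p) \<and> 0 < W (snd p) (fst p)"
  defines "\<pi> \<equiv> prod_mset (image_mset (\<lambda>p. P (snd p)) k)"
    and "\<omega> \<equiv> prod_mset (image_mset (\<lambda>p. W (snd p) (fst p)) k)"
  shows "\<exists>\<kappa>::nat. card {zs. mset zs = k} = card (Ycl k) * \<kappa> \<and> 1 \<le> \<kappa> \<and> real \<kappa> * \<pi> \<le> 1 \<and> 0 < \<pi> \<and> 0 < \<omega> \<and> \<omega> \<le> 1 \<and>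
     avg_error P W R K n \<ge> real (card {zs. mset zs = k}) * \<pi> * \<omega> *
           min (real (M - 1) * (real \<kappa> * \<pi>) * min (real L * \<omega>) 1 / 2) 1 / 288"
proof -
  obtain zs0 where zs0: "mset zs0 = k" using ex_mset by blast
  define y0 where "y0 = map fst zs0"
  have y0: "y0 \<in> Ycl k" unfolding y0_def Ycl_def using zs0 by auto
  define \<kappa> where "\<kappa> = card (Sk k y0)"
  have const: "card (Sk k y) = \<kappa>" if "y \<in> Ycl k" for y unfolding \<kappa>_def by (rule card_Sk_const[OF y0 that])
  have mu: "card {zs. mset zs = k} = card (Ycl k) * \<kappa>"
    unfolding card_joint using const by simp
  have mu1: "card {zs. mset zs = k} \<ge> 1"
  proof -
    have "finite {zs. mset zs = k}" using finite_permutations_of_multiset[of k]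
      by (simp add: permutations_of_multiset_def)
    moreover have "zs0 \<in> {zs. mset zs = k}" using zs0 by simp
    ultimately have "card {zs. mset zs = k} > 0" by (subst card_gt_0_iff) auto
    thus ?thesis by simp
  qed
  have "\<kappa> \<noteq> 0" using mu mu1 by auto
  hence k1: "\<kappa> \<ge> 1" by simp
  have Wle: "W x y \<le> 1" for x y
  proof -
    have "W x y \<le> (\<Sum>y'\<in>UNIV. W x y')" using W0 by (intro member_le_sum) auto
    thus ?thesis using W1 by simp
  qed
  have pipos: "0 < \<pi>" unfolding \<pi>_def using supp by (intro prod_mset_pos) auto
  have wpos: "0 < \<omega>" unfolding \<omega>_def using supp by (intro prod_mset_pos) auto
  have wle: "\<omega> \<le> 1" unfolding \<omega>_def using W0 Wle prod_mset_le1[of k "\<lambda>p. W (snd p) (fst p)"] by auto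
  have Sprops: "\<forall>y\<in>Ycl k. Sk k y \<subseteq> seqs n \<and> card (Sk k y) = \<kappa> \<and> (\<forall>x\<in>Sk k y. seq_prob P x = \<pi> \<and> chan_prob W x y = \<omega>)"
  proof (rule ballI, intro conjI)
    fix y assume y: "y \<in> Ycl k"
    show "Sk k y \<subseteq> seqs n" using Sk_seqs[of k y] n by simp
    show "card (Sk k y) = \<kappa>" using const[OF y] .
    show "\<forall>x\<in>Sk k y. seq_prob P x = \<pi> \<and> chan_prob W x y = \<omega>"
      using seq_prob_type[OF y] chan_prob_type[OF y] unfolding \<pi>_def \<omega>_def by simp
  qed
  have sle: "real \<kappa> * \<pi> \<le> 1"
  proof -
    have "real \<kappa> * \<pi> = (\<Sum>x\<in>Sk k y0. seq_prob P x)" using Sprops y0 by simp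
    also have "\<dots> \<le> (\<Sum>x\<in>seqs n. seq_prob P x)"
      using Sprops y0 seq_nonneg[OF P0] by (intro sum_mono2) auto
    also have "\<dots> = 1" by (rule seq_sum[OF P1])
    finally show ?thesis .
  qed
  have spos: "0 < real \<kappa> * \<pi>" using k1 pipos by simp
  have calc: "avg_error P W R K n \<ge> real (card (Ycl k)) * (real \<kappa> * \<pi>) * \<omega> *
           min (real (M - 1) * (real \<kappa> * \<pi>) * min (real L * \<omega>) 1 / 2) 1 / 288"
    by (rule per_n_bound[OF P0 P1 W0 W1 MM LL _ Sprops spos sle wpos wle]) (use Ycl_seqs[of k] n in auto)
  have e: "real (card (Ycl k)) * (real \<kappa> * \<pi>) = real (card {zs. mset zs = k}) * \<pi>"
    using mu by simp
  show ?thesis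
    by (rule exI[of _ \<kappa>]) (use mu k1 sle pipos wpos wle calc e in simp)
qed


lemma succ_pow_le: "(real m + 1) ^ m \<le> exp 1 * real m ^ m"
proof (cases "m = 0")
  case False
  hence m: "real m > 0" by simp
  have "real m + 1 = real m * (1 + 1 / real m)" using m by (simp add: field_simps)
  hence "(real m + 1) ^ m = (real m * (1 + 1 / real m)) ^ m" by simp
  also have "\<dots> = real m ^ m * (1 + 1 / real m) ^ m" by (simp add: power_mult_distrib)
  also have "(1 + 1 / real m) ^ m \<le> exp (1 / real m) ^ m"
    using m by (intro power_mono) (auto simp: exp_ge_add_one_self add.commute)
  also have "exp (1 / real m) ^ m = exp 1" using m by (simp add: exp_of_nat_mult[symmetric])
  finally show ?thesis using m by (simp add: mult.commute mult_left_mono)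
qed simp

lemma fact_lower: "real m ^ m \<le> exp (real m) * fact m"
proof (induction m)
  case (Suc m)
  have "real (Suc m) ^ Suc m = (real m + 1) * (real m + 1) ^ m" by (simp add: add.commute)
  also have "\<dots> \<le> (real m + 1) * (exp 1 * real m ^ m)" by (intro mult_left_mono succ_pow_le) auto
  also have "\<dots> \<le> (real m + 1) * (exp 1 * (exp (real m) * fact m))" using Suc by (intro mult_left_mono) auto
  also have "\<dots> = exp (real (Suc m)) * fact (Suc m)" by (simp add: exp_add[symmetric] algebra_simps)
  finally show ?case .
qed simp

lemma pow_succ_ge: assumes "j \<ge> 1" shows "exp 1 * real j ^ (j + 1) \<le> (real j + 1) ^ (j + 1)"
proof -
  have j: "real j \<ge> 1" using assms by simp
  have "(1 - 1 / (real j + 1)) ^ (j + 1) \<le> exp (- (1 / (real j + 1) * real (j + 1)))"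
    using j by (intro pow_exp) auto
  also have "\<dots> = exp (-1)" using j by simp
  finally have a: "(real j / (real j + 1)) ^ (j + 1) \<le> exp (-1)"
    using j by (simp add: field_simps)
  hence "real j ^ (j + 1) / (real j + 1) ^ (j + 1) \<le> exp (-1)" by (simp add: power_divide)
  hence "real j ^ (j + 1) \<le> exp (-1) * (real j + 1) ^ (j + 1)" using j by (simp add: divide_le_eq)
  hence "exp 1 * real j ^ (j + 1) \<le> exp 1 * (exp (-1) * (real j + 1) ^ (j + 1))" by (intro mult_left_mono) auto
  also have "\<dots> = (real j + 1) ^ (j + 1)" by (simp add: exp_minus)
  finally show ?thesis .
qed

lemma fact_upper: "fact m \<le> (real m + 1) ^ (m + 1) * exp (- real m)"
proof (induction m)
  case (Suc m)
  have "fact (Suc m) = (real m + 1) * fact m" by simp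
  also have "\<dots> \<le> (real m + 1) * ((real m + 1) ^ (m + 1) * exp (- real m))" using Suc by (intro mult_left_mono) auto
  also have "\<dots> = exp (-1) * (exp 1 * (real (m + 1)) ^ (m + 1 + 1)) * exp (- real m)"
    by (simp add: exp_minus field_simps)
  also have "\<dots> \<le> exp (-1) * (real (m + 1) + 1) ^ (m + 1 + 1) * exp (- real m)"
    by (intro mult_right_mono mult_left_mono pow_succ_ge) auto
  also have "\<dots> = (real (Suc m) + 1) ^ (Suc m + 1) * exp (- real (Suc m))"
  proof -
    have "exp (- real (Suc m)) = exp (-1) * exp (- real m)" by (simp add: exp_add[symmetric] algebra_simps)
    thus ?thesis by (simp add: mult_ac add.commute)
  qed
  finally show ?case .
qed simp

lemma ln_fact_ge: "real m * ln (real m) - real m \<le> ln (fact m)"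
proof (cases "m = 0")
  case False
  have "ln (real m ^ m) \<le> ln (exp (real m) * fact m)"
    using False fact_lower[of m] by (subst ln_le_cancel_iff) auto
  thus ?thesis using False by (simp add: ln_realpow ln_mult)
qed simp

lemma ln_fact_le: "ln (fact m) \<le> real m * ln (real m) - real m + 1 + ln (real m + 1)"
proof -
  have "ln (fact m) \<le> ln ((real m + 1) ^ (m + 1) * exp (- real m))"
    using fact_upper[of m] by (subst ln_le_cancel_iff) auto
  also have "\<dots> = (real m + 1) * ln (real m + 1) - real m"
  proof -
    have "ln ((real m + 1) ^ (m + 1) * exp (- real m)) = ln ((real m + 1) ^ (m + 1)) + ln (exp (- real m))"
      by (subst ln_mult) auto
    also have "ln ((real m + 1) ^ (m + 1)) = real (m + 1) * ln (real m + 1)"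
      by (rule ln_realpow)
    finally show ?thesis by simp
  qed
  also have "real m * ln (real m + 1) \<le> real m * ln (real m) + 1"
  proof (cases "m = 0")
    case False
    hence m: "real m > 0" by simp
    have "ln ((real m + 1) / real m) \<le> (real m + 1) / real m - 1" using m by (intro ln_le_minus_one) auto
    hence "ln (real m + 1) - ln (real m) \<le> 1 / real m" using m by (simp add: ln_div field_simps)
    hence "real m * (ln (real m + 1) - ln (real m)) \<le> real m * (1 / real m)" using m by (intro mult_left_mono) auto
    thus ?thesis using m by (simp add: algebra_simps)
  qed simp
  hence "(real m + 1) * ln (real m + 1) - real m \<le> real m * ln (real m) - real m + 1 + ln (real m + 1)"
    by (simp add: algebra_simps)
  finally show ?thesis .
qed


lemma ln_multinom:
  fixes c :: "'p::finite \<Rightarrow> nat" and \<mu> n :: nat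
  assumes mu: "real \<mu> * (\<Prod>p\<in>UNIV. fact (c p)) = fact n" and cs: "(\<Sum>p\<in>UNIV. c p) = n"
  shows "ln (real \<mu>) \<ge> real n * ln (real n) - (\<Sum>p\<in>UNIV. real (c p) * ln (real (c p))) - real CARD('p) * (1 + ln (real n + 1))"
    and "ln (real \<mu>) \<le> real n * ln (real n) - (\<Sum>p\<in>UNIV. real (c p) * ln (real (c p))) + 1 + ln (real n + 1)"
proof -
  have pos: "(\<Prod>p\<in>UNIV. fact (c p) :: real) > 0" by (intro prod_pos) auto
  have mueq: "real \<mu> = fact n / (\<Prod>p\<in>UNIV. fact (c p))" using mu pos by (simp add: field_simps)
  have lnmu: "ln (real \<mu>) = ln (fact n) - (\<Sum>p\<in>UNIV. ln (fact (c p)))"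
    unfolding mueq by (subst ln_div) (auto simp: ln_prod)
  have csr: "(\<Sum>p\<in>UNIV. real (c p)) = real n" using cs by (metis of_nat_sum)
  have cle: "c p \<le> n" for p
  proof -
    have "c p \<le> sum c UNIV" by (rule member_le_sum) auto
    thus ?thesis using cs by simp
  qed
  have "(\<Sum>p\<in>UNIV. ln (fact (c p))) \<le> (\<Sum>p\<in>UNIV. real (c p) * ln (real (c p)) - real (c p) + 1 + ln (real n + 1))"
  proof (rule sum_mono)
    fix p
    have "ln (real (c p) + 1) \<le> ln (real n + 1)" using cle[of p] by simp
    thus "ln (fact (c p)) \<le> real (c p) * ln (real (c p)) - real (c p) + 1 + ln (real n + 1)"
      using ln_fact_le[of "c p"] by linarith
  qed
  also have "\<dots> = (\<Sum>p\<in>UNIV. real (c p) * ln (real (c p))) - real n + real CARD('p) * (1 + ln (real n + 1))"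
    by (simp add: sum.distrib sum_subtractf csr algebra_simps)
  finally have up: "(\<Sum>p\<in>UNIV. ln (fact (c p))) \<le> (\<Sum>p\<in>UNIV. real (c p) * ln (real (c p))) - real n + real CARD('p) * (1 + ln (real n + 1))" .
  have "(\<Sum>p\<in>UNIV. ln (fact (c p))) \<ge> (\<Sum>p\<in>UNIV. real (c p) * ln (real (c p)) - real (c p))"
    by (rule sum_mono) (rule ln_fact_ge)
  also have "(\<Sum>p\<in>UNIV. real (c p) * ln (real (c p)) - real (c p)) = (\<Sum>p\<in>UNIV. real (c p) * ln (real (c p))) - real n"
    by (simp add: sum_subtractf csr)
  finally have lo: "(\<Sum>p\<in>UNIV. ln (fact (c p))) \<ge> (\<Sum>p\<in>UNIV. real (c p) * ln (real (c p))) - real n" .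
  show "ln (real \<mu>) \<ge> real n * ln (real n) - (\<Sum>p\<in>UNIV. real (c p) * ln (real (c p))) - real CARD('p) * (1 + ln (real n + 1))"
    using lnmu up ln_fact_ge[of n] by linarith
  show "ln (real \<mu>) \<le> real n * ln (real n) - (\<Sum>p\<in>UNIV. real (c p) * ln (real (c p))) + 1 + ln (real n + 1)"
    using lnmu lo ln_fact_le[of n] by linarith
qed

lemma card_mset_fact:
  fixes k :: "'p::finite multiset"
  shows "real (card {zs. mset zs = k}) * (\<Prod>p\<in>UNIV. fact (count k p)) = fact (size k)"
proof -
  have "(\<Prod>p\<in>UNIV. fact (count k p) :: nat) = (\<Prod>p\<in>set_mset k. fact (count k p))"
    by (rule prod.mono_neutral_right) (auto simp: not_in_iff)
  hence "card {zs. mset zs = k} * (\<Prod>p\<in>UNIV. fact (count k p) :: nat) = fact (size k)"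
    using card_permutations_of_multiset_aux[of k] by (simp add: permutations_of_multiset_def)
  hence "real (card {zs. mset zs = k} * (\<Prod>p\<in>UNIV. fact (count k p) :: nat)) = real (fact (size k))" by simp
  thus ?thesis by (simp add: of_nat_prod)
qed

lemma size_count_sum: "size (k :: 'p::finite multiset) = (\<Sum>p\<in>UNIV. count k p)"
proof -
  have "size k = sum (count k) (set_mset k)" by (rule size_multiset_overloaded_eq)
  also have "\<dots> = sum (count k) UNIV" by (rule sum.mono_neutral_left) (auto simp: not_in_iff)
  finally show ?thesis .
qed

lemma count_fst_sum: "count (image_mset fst k) b = (\<Sum>a\<in>UNIV. count k (b, a :: 'x::finite))"
proof (induction k)
  case (add p k)
  obtain b' a' where p: "p = (b', a')" by (cases p)
  have e: "count (add_mset p k) (b, a) = count k (b, a) + (if b' = b then (if a = a' then 1 else 0) else 0)" for a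
    by (auto simp: p)
  have "(\<Sum>a\<in>UNIV. count (add_mset p k) (b, a)) = (\<Sum>a\<in>UNIV. count k (b, a)) + (\<Sum>a\<in>UNIV. (if b' = b then (if a = a' then 1 else 0) else 0))"
    by (simp only: e sum.distrib)
  also have "(\<Sum>a\<in>UNIV. (if b' = b then (if a = a' then 1 else 0) else 0)) = (if b' = b then 1 else 0)"
    by (cases "b' = b") auto
  finally show ?case using add by (auto simp: p)
qed simp


lemma xlnx_cont: "continuous_on {0..} (\<lambda>x::real. x * ln x)"
  unfolding continuous_on_def
proof
  fix x :: real assume x: "x \<in> {0..}"
  show "((\<lambda>x. x * ln x) \<longlongrightarrow> x * ln x) (at x within {0..})"
  proof (cases "x = 0")
    case True
    have a: "at (0::real) within {0..} = at 0 within {0<..}"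
      by (rule at_within_nhd[of _ UNIV]) auto
    have "((\<lambda>x::real. x * ln x) \<longlongrightarrow> 0) (at_right 0)" by real_asymp
    thus ?thesis using True a by simp
  next
    case False
    hence "x > 0" using x by simp
    hence "isCont (\<lambda>x. x * ln x) x" by (intro continuous_intros) auto
    thus ?thesis by (simp add: isCont_def tendsto_within_subset[OF _ subset_UNIV])
  qed
qed

lemma xlnx_tendsto:
  fixes f :: "'a \<Rightarrow> real"
  assumes "(f \<longlongrightarrow> l) F" "\<forall>\<^sub>F n in F. 0 \<le> f n" "0 \<le> l"
  shows "((\<lambda>n. f n * ln (f n)) \<longlongrightarrow> l * ln l) F"
  using continuous_on_tendsto_compose[OF xlnx_cont assms(1)] assms(2,3) by simp

lemma nat_floor_bounds:
  assumes "0 \<le> (x::real)" shows "real (nat \<lfloor>x\<rfloor>) \<le> x" "real (nat \<lfloor>x\<rfloor>) \<ge> x - 1"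
proof -
  have e: "real (nat \<lfloor>x\<rfloor>) = real_of_int \<lfloor>x\<rfloor>" using assms by (intro of_nat_nat) simp
  show "real (nat \<lfloor>x\<rfloor>) \<le> x" unfolding e by linarith
  show "real (nat \<lfloor>x\<rfloor>) \<ge> x - 1" unfolding e by linarith
qed

lemma floor_conv:
  assumes q: "0 \<le> q"
  shows "((\<lambda>n. real (nat \<lfloor>real n * q\<rfloor>) / real n) \<longlongrightarrow> q) sequentially"
proof (rule tendsto_sandwich[where f = "\<lambda>n. q - 1 / real n" and h = "\<lambda>n. q"])
  show "\<forall>\<^sub>F n in sequentially. q - 1 / real n \<le> real (nat \<lfloor>real n * q\<rfloor>) / real n"
    using eventually_gt_at_top[of 0]
  proof eventually_elim
    case (elim n)
    have "real (nat \<lfloor>real n * q\<rfloor>) \<ge> real n * q - 1" using q by (intro nat_floor_bounds) simp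
    hence "(real n * q - 1) / real n \<le> real (nat \<lfloor>real n * q\<rfloor>) / real n" by (rule divide_right_mono) simp
    moreover have "q - 1 / real n = (real n * q - 1) / real n" using elim by (simp add: field_simps)
    ultimately show ?case by simp
  qed
  show "\<forall>\<^sub>F n in sequentially. real (nat \<lfloor>real n * q\<rfloor>) / real n \<le> q"
    using eventually_gt_at_top[of 0]
  proof eventually_elim
    case (elim n)
    have "real (nat \<lfloor>real n * q\<rfloor>) \<le> real n * q" using q by (intro nat_floor_bounds) simp
    hence "real (nat \<lfloor>real n * q\<rfloor>) / real n \<le> real n * q / real n" by (rule divide_right_mono) simp
    thus ?case using elim by simp
  qed
  show "((\<lambda>n. q - 1 / real n) \<longlongrightarrow> q) sequentially" by real_asymp
qed simp

lemma type_seq: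
  fixes Q :: "'p::finite \<Rightarrow> real"
  assumes Q0: "\<forall>p. 0 \<le> Q p" and Q1: "(\<Sum>p\<in>UNIV. Q p) = 1"
  shows "\<exists>c::nat \<Rightarrow> 'p \<Rightarrow> nat. (\<forall>n. (\<Sum>p\<in>UNIV. c n p) = n) \<and> (\<forall>n p. c n p > 0 \<longrightarrow> Q p > 0)
           \<and> (\<forall>p. ((\<lambda>n. real (c n p) / real n) \<longlongrightarrow> Q p) sequentially)"
proof -
  have "\<exists>p. Q p > 0"
  proof (rule ccontr)
    assume "\<not> (\<exists>p. Q p > 0)"
    hence "\<forall>p. Q p = 0" using Q0 by (simp add: order_antisym not_less)
    thus False using Q1 by simp
  qed
  then obtain p0 where p0: "Q p0 > 0" by blast
  define d where "d n p = nat \<lfloor>real n * Q p\<rfloor>" for n p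
  have dle: "real (d n p) \<le> real n * Q p" for n p unfolding d_def using Q0 by (intro nat_floor_bounds) simp
  have sumle: "(\<Sum>p\<in>UNIV-{p0}. d n p) \<le> n" for n
  proof -
    have "real (\<Sum>p\<in>UNIV-{p0}. d n p) = (\<Sum>p\<in>UNIV-{p0}. real (d n p))" by simp
    also have "\<dots> \<le> (\<Sum>p\<in>UNIV-{p0}. real n * Q p)" by (intro sum_mono dle)
    also have "\<dots> = real n * (\<Sum>p\<in>UNIV-{p0}. Q p)" by (simp add: sum_distrib_left)
    also have "(\<Sum>p\<in>UNIV-{p0}. Q p) = 1 - Q p0" using Q1 by (simp add: sum_diff1)
    also have "real n * (1 - Q p0) \<le> real n" using p0 by (simp add: mult_left_le)
    finally show ?thesis by linarith
  qed
  define c where "c n p = (if p = p0 then n - (\<Sum>p'\<in>UNIV-{p0}. d n p') else d n p)" for n p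
  have csum: "(\<Sum>p\<in>UNIV. c n p) = n" for n
  proof -
    have "(\<Sum>p\<in>UNIV. c n p) = c n p0 + (\<Sum>p\<in>UNIV-{p0}. c n p)" by (rule sum.remove) auto
    also have "(\<Sum>p\<in>UNIV-{p0}. c n p) = (\<Sum>p\<in>UNIV-{p0}. d n p)" unfolding c_def by (intro sum.cong) auto
    finally show ?thesis using sumle[of n] unfolding c_def by simp
  qed
  have csupp: "c n p > 0 \<longrightarrow> Q p > 0" for n p
  proof (cases "p = p0")
    case False
    show ?thesis
    proof
      assume "c n p > 0"
      hence "\<lfloor>real n * Q p\<rfloor> > 0" using False unfolding c_def d_def by simp
      hence "real n * Q p > 0" by linarith
      thus "Q p > 0" using Q0 by (simp add: zero_less_mult_iff)
    qed
  qed (use p0 in simp)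
  have dconv: "((\<lambda>n. real (d n p) / real n) \<longlongrightarrow> Q p) sequentially" for p
    unfolding d_def using floor_conv Q0 by simp
  have cconv: "((\<lambda>n. real (c n p) / real n) \<longlongrightarrow> Q p) sequentially" for p
  proof (cases "p = p0")
    case False thus ?thesis using dconv[of p] unfolding c_def by simp
  next
    case True
    have lim: "((\<lambda>n. 1 - (\<Sum>p'\<in>UNIV-{p0}. real (d n p') / real n)) \<longlongrightarrow> 1 - (\<Sum>p'\<in>UNIV-{p0}. Q p')) sequentially"
      by (intro tendsto_intros dconv)
    have e: "1 - (\<Sum>p'\<in>UNIV-{p0}. Q p') = Q p0" using Q1 by (simp add: sum_diff1)
    have ev: "\<forall>\<^sub>F n in sequentially. 1 - (\<Sum>p'\<in>UNIV-{p0}. real (d n p') / real n) = real (c n p0) / real n"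
      using eventually_gt_at_top[of 0]
    proof eventually_elim
      case (elim n)
      have "real (c n p0) = real n - (\<Sum>p'\<in>UNIV-{p0}. real (d n p'))"
        using sumle[of n] unfolding c_def by (simp add: of_nat_diff)
      thus ?case using elim by (simp add: field_simps sum_divide_distrib[symmetric])
    qed
    show ?thesis using Lim_transform_eventually[OF lim ev] e True by simp
  qed
  show ?thesis using csum csupp cconv by blast
qed


lemma log_chain:
  fixes avg \<mu> \<tau> \<kappa> \<pi> \<omega> M L :: real
  assumes avg: "avg \<ge> \<mu> * \<pi> * \<omega> * min (M * (\<kappa> * \<pi>) * min (L * \<omega>) 1 / 2) 1 / 288"
    and mu: "\<mu> = \<tau> * \<kappa>" and pos: "\<tau> > 0" "\<kappa> > 0" "\<pi> > 0" "\<omega> > 0" "M > 0" "L > 0"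
    and b1: "- ln \<mu> \<le> a1" and b2: "ln \<tau> \<le> a2" and b3: "ln \<pi> = a3" and b4: "ln \<omega> = a4"
    and b5: "- ln M \<le> a5" and b6: "- ln L \<le> a6"
  shows "- ln avg \<le> ln 288 + a1 - a3 - a4 + max 0 (ln 2 + a5 + (a2 + a1) - a3 + max 0 (a6 - a4))"
proof -
  define X where "X = M * (\<kappa> * \<pi>) * min (L * \<omega>) 1 / 2"
  have mupos: "\<mu> > 0" using mu pos by simp
  have Lw: "L * \<omega> > 0" using pos by simp
  have Xpos: "X > 0" unfolding X_def using pos Lw by simp
  have Ypos: "\<mu> * \<pi> * \<omega> * min X 1 / 288 > 0" using mupos pos Xpos by simp
  have s0: "- ln avg \<le> - ln (\<mu> * \<pi> * \<omega> * min X 1 / 288)"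
    using avg Ypos unfolding X_def by simp
  have s1: "- ln (\<mu> * \<pi> * \<omega> * min X 1 / 288) = ln 288 - ln \<mu> - ln \<pi> - ln \<omega> - ln (min X 1)"
  proof -
    have m: "min X 1 \<noteq> 0" using Xpos by simp
    have eq: "\<mu> * \<pi> * \<omega> * min X 1 / 288 = \<mu> * (\<pi> * (\<omega> * (min X 1 / 288)))" by simp
    have l: "ln (\<mu> * (\<pi> * (\<omega> * (min X 1 / 288)))) = ln \<mu> + (ln \<pi> + (ln \<omega> + (ln (min X 1) - ln 288)))"
      using m mupos pos by (simp add: ln_mult ln_div)
    show ?thesis unfolding eq using l by linarith
  qed
  have s2: "- ln (min X 1) = max 0 (- ln X)"
    using Xpos by (cases "X \<le> 1") (auto simp: min_def max_def)
  have s3: "- ln X = ln 2 - ln M - ln \<kappa> - ln \<pi> - ln (min (L * \<omega>) 1)"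
  proof -
    have mL: "min (L * \<omega>) 1 \<noteq> 0" using Lw by simp
    have eq: "X = M * (\<kappa> * (\<pi> * (min (L * \<omega>) 1 / 2)))" unfolding X_def by simp
    have "ln (M * (\<kappa> * (\<pi> * (min (L * \<omega>) 1 / 2)))) = ln M + (ln \<kappa> + (ln \<pi> + (ln (min (L * \<omega>) 1) - ln 2)))"
      using pos mL by (simp add: ln_mult ln_div)
    thus ?thesis unfolding eq by linarith
  qed
  have s4: "- ln (min (L * \<omega>) 1) = max 0 (- ln L - ln \<omega>)"
  proof -
    have lnLw: "ln (L * \<omega>) = ln L + ln \<omega>" using pos by (simp add: ln_mult)
    show ?thesis
    proof (cases "L * \<omega> \<le> 1")
      case True
      hence "ln (L * \<omega>) \<le> 0" using Lw by simp
      thus ?thesis using True lnLw by (simp add: min_def max_def)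
    next
      case False
      hence "ln (L * \<omega>) > 0" by simp
      thus ?thesis using False lnLw by (simp add: min_def max_def)
    qed
  qed
  have s5: "ln \<kappa> = ln \<mu> - ln \<tau>" using mu pos by (simp add: ln_mult)
  have main: "- ln avg \<le> ln 288 - ln \<mu> - ln \<pi> - ln \<omega> + max 0 (ln 2 - ln M - (ln \<mu> - ln \<tau>) - ln \<pi> + max 0 (- ln L - ln \<omega>))"
  proof -
    have "- ln X = ln 2 - ln M - (ln \<mu> - ln \<tau>) - ln \<pi> + max 0 (- ln L - ln \<omega>)" using s3 s4 s5 by linarith
    hence "- ln (min X 1) = max 0 (ln 2 - ln M - (ln \<mu> - ln \<tau>) - ln \<pi> + max 0 (- ln L - ln \<omega>))" using s2 by simp
    thus ?thesis using s0 s1 by linarith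
  qed
  have "max 0 (- ln L - ln \<omega>) \<le> max 0 (a6 - a4)" using b6 b4 by simp
  hence "max 0 (ln 2 - ln M - (ln \<mu> - ln \<tau>) - ln \<pi> + max 0 (- ln L - ln \<omega>)) \<le> max 0 (ln 2 + a5 + (a2 + a1) - a3 + max 0 (a6 - a4))"
    using b1 b2 b3 b5 by simp
  thus ?thesis using main b1 b3 b4 by linarith
qed

lemma ent_norm:
  fixes c :: "'p::finite \<Rightarrow> nat"
  assumes n: "n > 0" and cs: "(\<Sum>p\<in>UNIV. c p) = n"
  shows "(\<Sum>p\<in>UNIV. real (c p) * ln (real (c p))) = real n * ln (real n) + real n * (\<Sum>p\<in>UNIV. (real (c p) / real n) * ln (real (c p) / real n))"
proof -
  define h where "h p = (real (c p) / real n) * ln (real (c p) / real n)" for p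
  have t: "real (c p) * ln (real (c p)) = real (c p) * ln (real n) + real n * h p" for p
  proof (cases "c p = 0")
    case False thus ?thesis using n unfolding h_def by (simp add: ln_div algebra_simps)
  qed (simp add: h_def)
  have csr: "(\<Sum>p\<in>UNIV. real (c p)) = real n" using cs by (metis of_nat_sum)
  have "(\<Sum>p\<in>UNIV. real (c p) * ln (real (c p))) = (\<Sum>p\<in>UNIV. real (c p) * ln (real n)) + (\<Sum>p\<in>UNIV. real n * h p)"
    by (simp only: t sum.distrib)
  also have "(\<Sum>p\<in>UNIV. real (c p) * ln (real n)) = real n * ln (real n)"
    by (simp only: sum_distrib_right[symmetric] csr)
  also have "(\<Sum>p\<in>UNIV. real n * h p) = real n * (\<Sum>p\<in>UNIV. h p)"
    by (simp only: sum_distrib_left[symmetric])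
  finally show ?thesis unfolding h_def .
qed

lemma prod_mset_image_count:
  fixes k :: "'p::finite multiset"
  shows "prod_mset (image_mset f k) = (\<Prod>p\<in>UNIV. (f p :: real) ^ count k p)"
proof (induction k)
  case (add a k)
  have "(\<Prod>p\<in>UNIV. f p ^ count (add_mset a k) p) = (\<Prod>p\<in>UNIV. f p ^ count k p * (if p = a then f p else 1))"
    by (intro prod.cong) auto
  also have "\<dots> = (\<Prod>p\<in>UNIV. f p ^ count k p) * f a" by (simp add: prod.distrib)
  finally show ?case using add by (simp add: mult.commute)
qed simp

lemma ln_prod_mset_count:
  fixes k :: "'p::finite multiset"
  assumes "\<forall>p. count k p > 0 \<longrightarrow> f p > 0"
  shows "ln (prod_mset (image_mset f k)) = (\<Sum>p\<in>UNIV. real (count k p) * ln (f p))"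
proof -
  have nz: "f p ^ count k p \<noteq> 0" for p using assms by (cases "count k p = 0") auto
  show ?thesis unfolding prod_mset_image_count by (subst ln_prod) (use nz in \<open>auto simp: ln_realpow\<close>)
qed

lemma exp_size_bounds:
  assumes "exp (real n * R) \<ge> 4"
  shows "exp_size n R \<ge> 2" "ln (real (exp_size n R - 1)) \<ge> real n * R - ln 2"
    and "ln (real (exp_size n R)) \<ge> real n * R - ln 2"
proof -
  define E where "E = exp (real n * R)"
  have E: "E \<ge> 4" using assms unfolding E_def .
  have b: "real (exp_size n R) \<ge> E - 1" "real (exp_size n R) \<le> E"
    unfolding exp_size_def E_def[symmetric] using nat_floor_bounds[of E] E by auto
  show "exp_size n R \<ge> 2" using b E by linarith
  have m1: "real (exp_size n R - 1) \<ge> E / 2" using b E \<open>exp_size n R \<ge> 2\<close> by (simp add: of_nat_diff)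
  have "ln (E / 2) \<le> ln (real (exp_size n R - 1))" using m1 E by (subst ln_le_cancel_iff) auto
  moreover have "ln (E / 2) = real n * R - ln 2" unfolding E_def by (simp add: ln_div)
  ultimately show "ln (real (exp_size n R - 1)) \<ge> real n * R - ln 2" by simp
  have "ln (E / 2) \<le> ln (real (exp_size n R))" using b E by (subst ln_le_cancel_iff) auto
  thus "ln (real (exp_size n R)) \<ge> real n * R - ln 2" using \<open>ln (E / 2) = real n * R - ln 2\<close> by simp
qed

lemma eventually_exp_ge:
  assumes "R > 0"
  shows "\<forall>\<^sub>F n in sequentially. exp (real n * R) \<ge> 4"
proof -
  have "filterlim (\<lambda>n. R * real n) at_top sequentially"
    by (rule filterlim_tendsto_pos_mult_at_top[OF tendsto_const assms filterlim_real_sequentially])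
  hence "filterlim (\<lambda>n. real n * R) at_top sequentially" by (simp add: mult.commute)
  hence "filterlim (\<lambda>n. exp (real n * R)) at_top sequentially"
    by (rule filterlim_compose[OF exp_at_top])
  thus ?thesis by (simp add: filterlim_at_top)
qed


lemma max0_div: "0 < (d::real) \<Longrightarrow> max 0 x / d = max 0 (x / d)"
  by (cases "x \<le> 0") (auto simp: max_def divide_nonpos_pos field_simps)

lemma per_n_log:
  fixes P :: "'x::finite \<Rightarrow> real" and W :: "'x \<Rightarrow> 'y::finite \<Rightarrow> real" and cn :: "'y \<times> 'x \<Rightarrow> nat"
  assumes P0: "\<forall>x. 0 \<le> P x" and P1: "(\<Sum>x\<in>UNIV. P x) = 1"
    and W0: "\<forall>x y. 0 \<le> W x y" and W1: "\<forall>x. (\<Sum>y\<in>UNIV. W x y) = 1"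
    and n: "n > 0" and cs: "(\<Sum>p\<in>UNIV. cn p) = n"
    and supp: "\<forall>p. cn p > 0 \<longrightarrow> 0 < P (snd p) \<and> 0 < W (snd p) (fst p)"
    and eR: "exp (real n * R) \<ge> 4" and eK: "exp (real n * K) \<ge> 4"
  defines "fr \<equiv> \<lambda>p. real (cn p) / real n"
  shows "- ln (avg_error P W R K n) / real n \<le>
     ln 288 / real n + (\<Sum>p\<in>UNIV. fr p * ln (fr p)) + real CARD('y \<times> 'x) * ((1 + ln (real n + 1)) / real n)
     - (\<Sum>p\<in>UNIV. fr p * ln (P (snd p))) - (\<Sum>p\<in>UNIV. fr p * ln (W (snd p) (fst p)))
     + max 0 (2 * ln 2 / real n - R + (\<Sum>p\<in>UNIV. fr p * ln (fr p))
              - (\<Sum>b\<in>UNIV. (\<Sum>a\<in>UNIV. fr (b, a)) * ln (\<Sum>a\<in>UNIV. fr (b, a)))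
              + (real CARD('y \<times> 'x) + 1) * ((1 + ln (real n + 1)) / real n)
              - (\<Sum>p\<in>UNIV. fr p * ln (P (snd p)))
              + max 0 (ln 2 / real n - K - (\<Sum>p\<in>UNIV. fr p * ln (W (snd p) (fst p)))))"
proof -
  define k where "k = (\<Sum>p\<in>UNIV. replicate_mset (cn p) p)"
  have kc: "count k p = cn p" for p unfolding k_def by (simp add: count_sum)
  have ks: "size k = n" using size_count_sum[of k] kc cs by simp
  have ksupp: "\<forall>p\<in>#k. 0 < P (snd p) \<and> 0 < W (snd p) (fst p)"
  proof
    fix p assume "p \<in># k"
    hence "count k p > 0" by simp
    hence "cn p > 0" using kc by simp
    thus "0 < P (snd p) \<and> 0 < W (snd p) (fst p)" using supp by blast
  qed
  define M where "M = exp_size n R"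
  define L where "L = exp_size n K"
  have M2: "M \<ge> 2" and lnM: "ln (real (M - 1)) \<ge> real n * R - ln 2" using exp_size_bounds[OF eR] unfolding M_def by auto
  have L2: "L \<ge> 2" and lnL: "ln (real L) \<ge> real n * K - ln 2" using exp_size_bounds[OF eK] unfolding L_def by auto
  define \<pi> where "\<pi> = prod_mset (image_mset (\<lambda>p. P (snd p)) k)"
  define \<omega> where "\<omega> = prod_mset (image_mset (\<lambda>p. W (snd p) (fst p)) k)"
  have L1: "L \<ge> 1" using L2 by simp
  note ex = per_type_bound[OF P0 P1 W0 W1 M_def[symmetric] M2 L_def[symmetric] L1 ks ksupp, folded \<pi>_def \<omega>_def]
  obtain \<kappa> :: nat where kap: "card {zs. mset zs = k} = card (Ycl k) * \<kappa>" "1 \<le> \<kappa>" "real \<kappa> * \<pi> \<le> 1" "0 < \<pi>" "0 < \<omega>" "\<omega> \<le> 1"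
    and avgb: "avg_error P W R K n \<ge> real (card {zs. mset zs = k}) * \<pi> * \<omega> *
           min (real (M - 1) * (real \<kappa> * \<pi>) * min (real L * \<omega>) 1 / 2) 1 / 288"
    using ex by blast
  define \<mu> where "\<mu> = card {zs. mset zs = k}"
  define \<tau> where "\<tau> = card (Ycl k)"
  have mu1: "\<mu> \<ge> 1"
  proof -
    have "finite {zs. mset zs = k}" using finite_permutations_of_multiset[of k] by (simp add: permutations_of_multiset_def)
    moreover obtain zs0 where "mset zs0 = k" using ex_mset by blast
    ultimately have "card {zs. mset zs = k} > 0" by (subst card_gt_0_iff) auto
    thus ?thesis unfolding \<mu>_def by simp
  qed
  have tau: "\<tau> > 0" using mu1 kap(1) unfolding \<mu>_def \<tau>_def by (cases "\<tau> = 0") (auto simp: \<tau>_def)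
  define H where "H = (\<Sum>p\<in>UNIV. fr p * ln (fr p))"
  define HT where "HT = (\<Sum>b\<in>UNIV. (\<Sum>a\<in>UNIV. fr (b, a)) * ln (\<Sum>a\<in>UNIV. fr (b, a)))"
  define LP where "LP = (\<Sum>p\<in>UNIV. fr p * ln (P (snd p)))"
  define LW where "LW = (\<Sum>p\<in>UNIV. fr p * ln (W (snd p) (fst p)))"
  define CP where "CP = real CARD('y \<times> 'x)"
  have nr: "real n > 0" using n by simp
  have b1: "- ln (real \<mu>) \<le> real n * H + CP * (1 + ln (real n + 1))"
  proof -
    have "ln (real \<mu>) \<ge> real n * ln (real n) - (\<Sum>p\<in>UNIV. real (cn p) * ln (real (cn p))) - CP * (1 + ln (real n + 1))"
      using ln_multinom(1)[of \<mu> cn n] card_mset_fact[of k] kc ks cs unfolding \<mu>_def CP_def by simp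
    moreover have "(\<Sum>p\<in>UNIV. real (cn p) * ln (real (cn p))) = real n * ln (real n) + real n * H"
      unfolding H_def fr_def by (rule ent_norm[OF n cs])
    ultimately show ?thesis by linarith
  qed
  have b2: "ln (real \<tau>) \<le> - (real n * HT) + 1 + ln (real n + 1)"
  proof -
    define Tm where "Tm = image_mset fst k"
    define t where "t b = count Tm b" for b
    have tsum: "t b = (\<Sum>a\<in>UNIV. cn (b, a))" for b unfolding t_def Tm_def count_fst_sum kc ..
    have Ts: "size Tm = n" unfolding Tm_def using ks by simp
    have tcs: "(\<Sum>b\<in>UNIV. t b) = n" using size_count_sum[of Tm] Ts unfolding t_def by simp
    have tauc: "\<tau> = card {ys. mset ys = Tm}" unfolding \<tau>_def Ycl_def Tm_def ..
    have "ln (real \<tau>) \<le> real n * ln (real n) - (\<Sum>b\<in>UNIV. real (t b) * ln (real (t b))) + 1 + ln (real n + 1)"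
      using ln_multinom(2)[of \<tau> t n] card_mset_fact[of Tm] Ts tcs unfolding tauc t_def by simp
    moreover have "(\<Sum>b\<in>UNIV. real (t b) * ln (real (t b))) = real n * ln (real n) + real n * (\<Sum>b\<in>UNIV. (real (t b) / real n) * ln (real (t b) / real n))"
      by (rule ent_norm[OF n tcs])
    moreover have "real (t b) / real n = (\<Sum>a\<in>UNIV. fr (b, a))" for b
      unfolding tsum fr_def by (simp add: sum_divide_distrib)
    ultimately show ?thesis unfolding HT_def by simp
  qed
  have b3: "ln \<pi> = real n * LP"
  proof -
    have "ln \<pi> = (\<Sum>p\<in>UNIV. real (count k p) * ln (P (snd p)))"
      unfolding \<pi>_def by (rule ln_prod_mset_count) (use supp kc in auto)
    also have "\<dots> = real n * LP" unfolding LP_def fr_def kc using nr by (simp add: sum_distrib_left)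
    finally show ?thesis .
  qed
  have b4: "ln \<omega> = real n * LW"
  proof -
    have "ln \<omega> = (\<Sum>p\<in>UNIV. real (count k p) * ln (W (snd p) (fst p)))"
      unfolding \<omega>_def by (rule ln_prod_mset_count) (use supp kc in auto)
    also have "\<dots> = real n * LW" unfolding LW_def fr_def kc using nr by (simp add: sum_distrib_left)
    finally show ?thesis .
  qed
  have b5: "- ln (real (M - 1)) \<le> - (real n * R) + ln 2" using lnM by simp
  have b6: "- ln (real L) \<le> - (real n * K) + ln 2" using lnL by simp
  have chain: "- ln (avg_error P W R K n) \<le> ln 288 + (real n * H + CP * (1 + ln (real n + 1))) - real n * LP - real n * LW
      + max 0 (ln 2 + (- (real n * R) + ln 2) + ((- (real n * HT) + 1 + ln (real n + 1)) + (real n * H + CP * (1 + ln (real n + 1)))) - real n * LP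
               + max 0 ((- (real n * K) + ln 2) - real n * LW))"
  proof (rule log_chain[where \<tau> = "real \<tau>" and \<kappa> = "real \<kappa>"])
    show "avg_error P W R K n \<ge> real \<mu> * \<pi> * \<omega> * min (real (M - 1) * (real \<kappa> * \<pi>) * min (real L * \<omega>) 1 / 2) 1 / 288"
      using avgb unfolding \<mu>_def .
    show "real \<mu> = real \<tau> * real \<kappa>" using kap(1) unfolding \<mu>_def \<tau>_def by simp
  qed (use tau kap M2 L2 b1 b2 b3 b4 b5 b6 in auto)
  have "- ln (avg_error P W R K n) / real n \<le> (ln 288 + (real n * H + CP * (1 + ln (real n + 1))) - real n * LP - real n * LW
      + max 0 (ln 2 + (- (real n * R) + ln 2) + ((- (real n * HT) + 1 + ln (real n + 1)) + (real n * H + CP * (1 + ln (real n + 1)))) - real n * LP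
               + max 0 ((- (real n * K) + ln 2) - real n * LW))) / real n"
    by (rule divide_right_mono[OF chain]) (use nr in simp)
  also have "\<dots> = ln 288 / real n + H + CP * ((1 + ln (real n + 1)) / real n) - LP - LW
      + max 0 (2 * ln 2 / real n - R + H - HT + (CP + 1) * ((1 + ln (real n + 1)) / real n) - LP
               + max 0 (ln 2 / real n - K - LW))"
  proof -
    define N where "N = real n"
    define l1 where "l1 = ln (real n + 1)"
    have N: "N > 0" using nr unfolding N_def .
    have eY: "(- (N * K) + ln 2 - N * LW) / N = ln 2 / N - K - LW" using N by (simp add: field_simps)
    have eX0: "(ln 2 + (- (N * R) + ln 2) + ((- (N * HT) + 1 + l1) + (N * H + CP * (1 + l1))) - N * LP) / N
        = 2 * ln 2 / N - R + H - HT + (CP + 1) * ((1 + l1) / N) - LP" using N by (simp add: field_simps)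
    have eE0: "(ln 288 + (N * H + CP * (1 + l1)) - N * LP - N * LW) / N = ln 288 / N + H + CP * ((1 + l1) / N) - LP - LW"
      using N by (simp add: field_simps)
    have "(ln 288 + (N * H + CP * (1 + l1)) - N * LP - N * LW
      + max 0 (ln 2 + (- (N * R) + ln 2) + ((- (N * HT) + 1 + l1) + (N * H + CP * (1 + l1))) - N * LP
               + max 0 ((- (N * K) + ln 2) - N * LW))) / N
      = (ln 288 + (N * H + CP * (1 + l1)) - N * LP - N * LW) / N
      + max 0 ((ln 2 + (- (N * R) + ln 2) + ((- (N * HT) + 1 + l1) + (N * H + CP * (1 + l1))) - N * LP) / N
               + max 0 ((- (N * K) + ln 2) - N * LW) / N)"
      using N by (simp only: add_divide_distrib max0_div)
    also have "\<dots> = ln 288 / N + H + CP * ((1 + l1) / N) - LP - LW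
      + max 0 (2 * ln 2 / N - R + H - HT + (CP + 1) * ((1 + l1) / N) - LP + max 0 (ln 2 / N - K - LW))"
      using N by (simp only: eE0 eX0 max0_div eY)
    finally show ?thesis unfolding N_def l1_def .
  qed
  finally show ?thesis unfolding H_def HT_def LP_def LW_def CP_def .
qed


lemma sum_pairs: "(\<Sum>p\<in>UNIV. f p) = (\<Sum>y\<in>UNIV. \<Sum>x\<in>UNIV. f (y, x))"
  for f :: "'y::finite \<times> 'x::finite \<Rightarrow> real"
  by (simp add: sum.cartesian_product)

lemma divg_eq:
  fixes P :: "'x::finite \<Rightarrow> real" and W :: "'x \<Rightarrow> 'y::finite \<Rightarrow> real" and Q :: "'y \<times> 'x \<Rightarrow> real"
  assumes P0: "\<forall>x. 0 \<le> P x" and W0: "\<forall>x y. 0 \<le> W x y" and Q0: "\<forall>p. 0 \<le> Q p"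
    and supp: "\<forall>y x. 0 < Q (y, x) \<longrightarrow> 0 < P x * W x y"
  shows "divg P W Q = (\<Sum>p\<in>UNIV. Q p * ln (Q p)) - (\<Sum>p\<in>UNIV. Q p * ln (P (snd p))) - (\<Sum>p\<in>UNIV. Q p * ln (W (snd p) (fst p)))"
proof -
  have t: "(case p of (y, x) \<Rightarrow> Q (y, x) * ln (Q (y, x) / (P x * W x y))) = Q p * ln (Q p) - Q p * ln (P (snd p)) - Q p * ln (W (snd p) (fst p))" for p
  proof (cases p)
    case (Pair y x)
    show ?thesis
    proof (cases "Q (y, x) = 0")
      case False
      moreover have "0 \<le> Q (y, x)" using Q0 by blast
      ultimately have q: "Q (y, x) > 0" by linarith
      hence pw: "0 < P x * W x y" using supp by auto
      have "0 \<le> P x" "0 \<le> W x y" using P0 W0 by auto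
      moreover have "P x \<noteq> 0" "W x y \<noteq> 0" using pw by auto
      ultimately have px: "P x > 0" and wx: "W x y > 0" by linarith+
      show ?thesis using q px wx Pair by (simp add: ln_div ln_mult algebra_simps)
    qed (simp add: Pair)
  qed
  have "divg P W Q = (\<Sum>p\<in>UNIV. Q p * ln (Q p) - Q p * ln (P (snd p)) - Q p * ln (W (snd p) (fst p)))"
    unfolding divg_def by (rule sum.cong) (auto simp: t[symmetric])
  thus ?thesis by (simp only: sum_subtractf)
qed

lemma A_eq:
  fixes P :: "'x::finite \<Rightarrow> real" and Q :: "'y::finite \<times> 'x \<Rightarrow> real"
  assumes P0: "\<forall>x. 0 \<le> P x" and Q0: "\<forall>p. 0 \<le> Q p"
    and supp: "\<forall>y x. 0 < Q (y, x) \<longrightarrow> 0 < P x"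
  shows "A_TV P Q = (\<Sum>p\<in>UNIV. Q p * ln (Q p)) - (\<Sum>y\<in>UNIV. (\<Sum>x\<in>UNIV. Q (y, x)) * ln (\<Sum>x\<in>UNIV. Q (y, x)))
            - (\<Sum>p\<in>UNIV. Q p * ln (P (snd p)))"
proof -
  define m where "m y = (\<Sum>x\<in>UNIV. Q (y, x))" for y
  have t: "(case p of (y, x) \<Rightarrow> Q (y, x) * ln (condV Q y x / P x)) = Q p * ln (Q p) - Q p * ln (m (fst p)) - Q p * ln (P (snd p))" for p
  proof (cases p)
    case (Pair y x)
    show ?thesis
    proof (cases "Q (y, x) = 0")
      case False
      moreover have "0 \<le> Q (y, x)" using Q0 by blast
      ultimately have q: "Q (y, x) > 0" by linarith
      hence px: "P x > 0" using supp by auto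
      have "Q (y, x) \<le> m y" unfolding m_def using Q0 by (intro member_le_sum) auto
      hence my: "m y > 0" using q by simp
      have cv: "condV Q y x = Q (y, x) / m y" unfolding condV_def marg_def m_def ..
      show ?thesis using q px my Pair by (simp add: cv ln_div algebra_simps)
    qed (simp add: Pair)
  qed
  have "A_TV P Q = (\<Sum>p\<in>UNIV. Q p * ln (Q p)) - (\<Sum>p\<in>UNIV. Q p * ln (m (fst p))) - (\<Sum>p\<in>UNIV. Q p * ln (P (snd p)))"
  proof -
    have "A_TV P Q = (\<Sum>p\<in>UNIV. Q p * ln (Q p) - Q p * ln (m (fst p)) - Q p * ln (P (snd p)))"
      unfolding A_TV_def by (rule sum.cong) (auto simp: t[symmetric])
    thus ?thesis by (simp only: sum_subtractf)
  qed
  also have "(\<Sum>p\<in>UNIV. Q p * ln (m (fst p))) = (\<Sum>y\<in>UNIV. m y * ln (m y))"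
    by (subst sum_pairs) (simp add: m_def sum_distrib_right)
  finally show ?thesis unfolding m_def .
qed

lemma B_eq:
  fixes W :: "'x::finite \<Rightarrow> 'y::finite \<Rightarrow> real" and Q :: "'y \<times> 'x \<Rightarrow> real"
  shows "B_TV W Q = - (\<Sum>p\<in>UNIV. Q p * ln (W (snd p) (fst p)))"
proof -
  have t: "(case p of (y, x) \<Rightarrow> Q (y, x) * (- ln (W x y))) = - (Q p * ln (W (snd p) (fst p)))" for p
    by (cases p) simp
  have "B_TV W Q = (\<Sum>p\<in>UNIV. - (Q p * ln (W (snd p) (fst p))))"
    unfolding B_TV_def by (rule sum.cong) (auto simp: t[symmetric])
  thus ?thesis by (simp add: sum_negf)
qed


lemma limsup_le_Q:
  fixes P :: "'x::finite \<Rightarrow> real" and W :: "'x \<Rightarrow> 'y::finite \<Rightarrow> real" and Q :: "'y \<times> 'x \<Rightarrow> real"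
  assumes P0: "\<forall>x. 0 \<le> P x" and P1: "(\<Sum>x\<in>UNIV. P x) = 1"
    and W0: "\<forall>x y. 0 \<le> W x y" and W1: "\<forall>x. (\<Sum>y\<in>UNIV. W x y) = 1"
    and R: "R > 0" and K: "K > 0" and Q: "Q \<in> joint_dists P W"
  shows "limsup (\<lambda>n. ereal (- ln (avg_error P W R K n) / real n))
           \<le> ereal (divg P W Q + pos_part (A_TV P Q - R + pos_part (B_TV W Q - K)))"
proof -
  have Q0: "\<forall>p. 0 \<le> Q p" and Q1: "(\<Sum>p\<in>UNIV. Q p) = 1" and Qs: "\<forall>y x. 0 < Q (y, x) \<longrightarrow> 0 < P x * W x y"
    using Q unfolding joint_dists_def by auto
  have Qs2: "0 < P (snd p) \<and> 0 < W (snd p) (fst p)" if "Q p > 0" for p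
  proof -
    obtain y x where p: "p = (y, x)" by (cases p)
    have pw: "0 < P x * W x y" using Qs that p by auto
    have "0 \<le> P x" "0 \<le> W x y" using P0 W0 by auto
    moreover have "P x \<noteq> 0" "W x y \<noteq> 0" using pw by auto
    ultimately show ?thesis using p by simp
  qed
  obtain c where cs: "\<forall>n. (\<Sum>p\<in>UNIV. c n p) = n" and csupp: "\<forall>n p. c n p > 0 \<longrightarrow> Q p > 0"
    and cconv: "\<forall>p. ((\<lambda>n. real (c n p) / real n) \<longlongrightarrow> Q p) sequentially"
    using type_seq[OF Q0 Q1] by blast
  define fr where "fr n p = real (c n p) / real n" for n p
  define CP where "CP = real CARD('y \<times> 'x)"
  define U where "U n = ln 288 / real n + (\<Sum>p\<in>UNIV. fr n p * ln (fr n p)) + CP * ((1 + ln (real n + 1)) / real n)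
     - (\<Sum>p\<in>UNIV. fr n p * ln (P (snd p))) - (\<Sum>p\<in>UNIV. fr n p * ln (W (snd p) (fst p)))
     + max 0 (2 * ln 2 / real n - R + (\<Sum>p\<in>UNIV. fr n p * ln (fr n p))
              - (\<Sum>b\<in>UNIV. (\<Sum>a\<in>UNIV. fr n (b, a)) * ln (\<Sum>a\<in>UNIV. fr n (b, a)))
              + (CP + 1) * ((1 + ln (real n + 1)) / real n)
              - (\<Sum>p\<in>UNIV. fr n p * ln (P (snd p)))
              + max 0 (ln 2 / real n - K - (\<Sum>p\<in>UNIV. fr n p * ln (W (snd p) (fst p)))))" for n
  have ev: "\<forall>\<^sub>F n in sequentially. ereal (- ln (avg_error P W R K n) / real n) \<le> ereal (U n)"
    using eventually_exp_ge[OF R] eventually_exp_ge[OF K] eventually_gt_at_top[of 0]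
  proof eventually_elim
    case (elim n)
    have "- ln (avg_error P W R K n) / real n \<le> U n"
      unfolding U_def fr_def CP_def
      by (rule per_n_log[OF P0 P1 W0 W1 elim(3) cs[rule_format] _ elim(1) elim(2)]) (use csupp Qs2 in blast)
    thus ?case by simp
  qed
  define HQ where "HQ = (\<Sum>p\<in>UNIV. Q p * ln (Q p))"
  define HTQ where "HTQ = (\<Sum>b\<in>UNIV. (\<Sum>a\<in>UNIV. Q (b, a)) * ln (\<Sum>a\<in>UNIV. Q (b, a)))"
  define LPQ where "LPQ = (\<Sum>p\<in>UNIV. Q p * ln (P (snd p)))"
  define LWQ where "LWQ = (\<Sum>p\<in>UNIV. Q p * ln (W (snd p) (fst p)))"
  have frc: "((\<lambda>n. fr n p) \<longlongrightarrow> Q p) sequentially" for p unfolding fr_def using cconv by blast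
  have fr0: "0 \<le> fr n p" for n p unfolding fr_def by simp
  have lH: "((\<lambda>n. \<Sum>p\<in>UNIV. fr n p * ln (fr n p)) \<longlongrightarrow> HQ) sequentially"
    unfolding HQ_def by (intro tendsto_sum xlnx_tendsto frc) (auto simp: fr0 Q0)
  have frs0: "0 \<le> (\<Sum>a\<in>UNIV. fr n (b, a))" for n b by (intro sum_nonneg) (simp add: fr0)
  have lHT: "((\<lambda>n. \<Sum>b\<in>UNIV. (\<Sum>a\<in>UNIV. fr n (b, a)) * ln (\<Sum>a\<in>UNIV. fr n (b, a))) \<longlongrightarrow> HTQ) sequentially"
    unfolding HTQ_def by (intro tendsto_sum xlnx_tendsto frc) (auto simp: frs0 Q0 intro!: sum_nonneg)
  have lLP: "((\<lambda>n. \<Sum>p\<in>UNIV. fr n p * ln (P (snd p))) \<longlongrightarrow> LPQ) sequentially"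
    unfolding LPQ_def by (intro tendsto_intros frc)
  have lLW: "((\<lambda>n. \<Sum>p\<in>UNIV. fr n p * ln (W (snd p) (fst p))) \<longlongrightarrow> LWQ) sequentially"
    unfolding LWQ_def by (intro tendsto_intros frc)
  have z1: "((\<lambda>n. ln 288 / real n) \<longlongrightarrow> 0) sequentially" by real_asymp
  have z2: "((\<lambda>n. (1 + ln (real n + 1)) / real n) \<longlongrightarrow> 0) sequentially" by real_asymp
  have z3: "((\<lambda>n. 2 * ln 2 / real n) \<longlongrightarrow> 0) sequentially" by real_asymp
  have z4: "((\<lambda>n. ln 2 / real n) \<longlongrightarrow> 0) sequentially" by real_asymp
  have lU: "(U \<longlongrightarrow> 0 + HQ + CP * 0 - LPQ - LWQ + max 0 (0 - R + HQ - HTQ + (CP + 1) * 0 - LPQ + max 0 (0 - K - LWQ))) sequentially"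
    unfolding U_def by (intro tendsto_intros lH lHT lLP lLW z1 z2 z3 z4)
  have Feq: "0 + HQ + CP * 0 - LPQ - LWQ + max 0 (0 - R + HQ - HTQ + (CP + 1) * 0 - LPQ + max 0 (0 - K - LWQ))
      = divg P W Q + pos_part (A_TV P Q - R + pos_part (B_TV W Q - K))"
  proof -
    have d: "divg P W Q = HQ - LPQ - LWQ" unfolding HQ_def LPQ_def LWQ_def by (rule divg_eq[OF P0 W0 Q0 Qs])
    have a: "A_TV P Q = HQ - HTQ - LPQ" unfolding HQ_def HTQ_def LPQ_def
      by (rule A_eq[OF P0 Q0]) (use Qs2 in force)
    have b: "B_TV W Q = - LWQ" unfolding LWQ_def by (rule B_eq)
    show ?thesis unfolding d a b pos_part_def by simp
  qed
  have "limsup (\<lambda>n. ereal (- ln (avg_error P W R K n) / real n)) \<le> limsup (\<lambda>n. ereal (U n))"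
    by (rule Limsup_mono[OF ev])
  also have "limsup (\<lambda>n. ereal (U n)) = ereal (divg P W Q + pos_part (A_TV P Q - R + pos_part (B_TV W Q - K)))"
    using lim_imp_Limsup[OF trivial_limit_sequentially tendsto_ereal[OF lU]] Feq by simp
  finally show ?thesis .
qed


theorem lemma5:
  fixes P :: "'x::finite \<Rightarrow> real" and W :: "'x \<Rightarrow> 'y::finite \<Rightarrow> real"
    and R K :: real
  assumes "\<forall>x. 0 \<le> P x" and "(\<Sum>x\<in>UNIV. P x) = 1"
    and "\<forall>x y. 0 \<le> W x y" and "\<forall>x. (\<Sum>y\<in>UNIV. W x y) = 1"
    and "R > 0" and "K > 0"
  shows "limsup (\<lambda>n. ereal (- ln (avg_error P W R K n) / real n)) \<le> ereal (E_e P W R K)"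
proof -
  note P0 = assms(1) and P1 = assms(2) and W0 = assms(3) and W1 = assms(4)
  define f where "f Q = divg P W Q + pos_part (A_TV P Q - R + pos_part (B_TV W Q - K))" for Q
  define l where "l = limsup (\<lambda>n. ereal (- ln (avg_error P W R K n) / real n))"
  define Q0 where "Q0 = (\<lambda>(y, x). P x * W x y)"
  have Q0J: "Q0 \<in> joint_dists P W"
  proof -
    have "(\<Sum>p\<in>UNIV. Q0 p) = (\<Sum>y\<in>UNIV. \<Sum>x\<in>UNIV. P x * W x y)" unfolding Q0_def by (subst sum_pairs) simp
    also have "\<dots> = (\<Sum>x\<in>UNIV. P x * (\<Sum>y\<in>UNIV. W x y))" by (subst sum.swap) (simp add: sum_distrib_left)
    also have "\<dots> = 1" using W1 P1 by simp
    finally have s: "(\<Sum>p\<in>UNIV. Q0 p) = 1" .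
    have "\<forall>p. 0 \<le> Q0 p" unfolding Q0_def using P0 W0 by auto
    thus ?thesis unfolding joint_dists_def using s by (auto simp: Q0_def)
  qed
  have all: "l \<le> ereal (f Q)" if "Q \<in> joint_dists P W" for Q
    unfolding l_def f_def by (rule limsup_le_Q[OF P0 P1 W0 W1 assms(5,6) that])
  have E: "E_e P W R K = Inf (f ` joint_dists P W)" unfolding E_e_def f_def ..
  show ?thesis
  proof (cases l)
    case (real r)
    have "r \<le> Inf (f ` joint_dists P W)"
    proof (rule cInf_greatest)
      show "f ` joint_dists P W \<noteq> {}" using Q0J by auto
      fix z assume "z \<in> f ` joint_dists P W"
      then obtain Q where "Q \<in> joint_dists P W" "z = f Q" by auto
      thus "r \<le> z" using all[of Q] real by simp
    qed
    thus ?thesis using real E unfolding l_def by simp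
  next
    case PInf
    thus ?thesis using all[OF Q0J] by simp
  next
    case MInf
    thus ?thesis unfolding l_def by simp
  qed
qed


end
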